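(* Let $I$ be a compact interval, $\tau>0$, and $G\le\mathrm{Diff}_+^{1,\tau}(I)$. If $c$ belongs to the center of $G$, then the restriction of the action of $G$ to $\operatorname{supp} c$ is Conradian.
   Context: $\mathrm{Diff}_+^{1,\tau}(I)$ is the group of orientation-preserving $C^1$-diffeomorphisms of $I$ with $\tau$-Hölder continuous derivative. $\operatorname{supp} c=I\setminus\mathrm{Fix}(c)$, which is $G$-invariant. For a group acting by order-preserving bijections on an ordered set $\Omega$ (here $\Omega=\operatorname{supp} c$ with the order of $I$), $f,g$ are crossed if there exist $u<w<v$ in $\Omega$ with $g^n(u)<w<f^n(v)$ for all $n\in\mathbb{Z}$ and $g^N(v)<w<f^N(u)$ for some $N\in\mathbb{Z}$; the action is Conradian if no two elements are crossed. *)

theory Defs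
  imports "HOL-Analysis.Analysis"
begin

text \<open>Positivity of the
  derivative together with bijectivity of I encodes "orientation-preserving diffeomorphism".\<close>
definition Diff_1_tau :: "real set \<Rightarrow> real \<Rightarrow> (real \<Rightarrow> real) set" where
  "Diff_1_tau I \<tau> = {f. bij_betw f I I \<and>
     (\<exists>f'. (\<forall>x\<in>I. (f has_real_derivative f' x) (at x within I) \<and> f' x > 0) \<and>
           (\<exists>C. \<forall>x\<in>I. \<forall>y\<in>I. \<bar>f' x - f' y\<bar> \<le> C * \<bar>x - y\<bar> powr \<tau>))}"

text \<open>G is a subgroup of Diff(I); group elements are identified by their values on I.\<close>
definition diff_subgroup :: "real set \<Rightarrow> real \<Rightarrow> (real \<Rightarrow> real) set \<Rightarrow> bool" where
  "diff_subgroup I \<tau> G \<longleftrightarrow> G \<subseteq> Diff_1_tau I \<tau> \<and>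
     (\<exists>e\<in>G. \<forall>x\<in>I. e x = x) \<and>
     (\<forall>f\<in>G. \<forall>g\<in>G. \<exists>h\<in>G. \<forall>x\<in>I. h x = f (g x)) \<and>
     (\<forall>f\<in>G. \<exists>h\<in>G. \<forall>x\<in>I. h x = inv_into I f x)"

definition in_center :: "real set \<Rightarrow> (real \<Rightarrow> real) set \<Rightarrow> (real \<Rightarrow> real) \<Rightarrow> bool" where
  "in_center I G c \<longleftrightarrow> c \<in> G \<and> (\<forall>g\<in>G. \<forall>x\<in>I. c (g x) = g (c x))"

definition supp :: "real set \<Rightarrow> (real \<Rightarrow> real) \<Rightarrow> real set" where
  "supp I c = {x\<in>I. c x \<noteq> x}"

definition ipow :: "real set \<Rightarrow> (real \<Rightarrow> real) \<Rightarrow> int \<Rightarrow> real \<Rightarrow> real" where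
  "ipow I f n = (if n \<ge> 0 then f ^^ nat n else (inv_into I f) ^^ nat (- n))"

definition crossed :: "real set \<Rightarrow> real set \<Rightarrow> (real \<Rightarrow> real) \<Rightarrow> (real \<Rightarrow> real) \<Rightarrow> bool" where
  "crossed I \<Omega> f g \<longleftrightarrow> (\<exists>u\<in>\<Omega>. \<exists>w\<in>\<Omega>. \<exists>v\<in>\<Omega>. u < w \<and> w < v \<and>
     (\<forall>n::int. ipow I g n u < w \<and> w < ipow I f n v) \<and>
     (\<exists>N::int. ipow I g N v < w \<and> w < ipow I f N u))"

definition conradian_on :: "real set \<Rightarrow> (real \<Rightarrow> real) set \<Rightarrow> real set \<Rightarrow> bool" where
  "conradian_on I G \<Omega> \<longleftrightarrow> (\<forall>f\<in>G. \<forall>g\<in>G. \<not> crossed I \<Omega> f g)"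

end

theory Submission
  imports Defs
begin

lemma deriv_unique_Icc:
  fixes f :: "real \<Rightarrow> real"
  assumes "a < b" "x \<in> {a..b}" "(f has_real_derivative d1) (at x within {a..b})"
    "(f has_real_derivative d2) (at x within {a..b})"
  shows "d1 = d2"
proof -
  have "(*) d1 = (*) d2"
    using frechet_derivative_unique_within_closed_interval[of a b x f "(*) d1" "(*) d2"] assms
    by (auto simp: has_field_derivative_def)
  then show ?thesis by (metis mult.right_neutral)
qed

lemma no_all_neg_zeros:
  fixes \<phi> :: "real \<Rightarrow> real"
  assumes lh: "lo < hi" and cont: "continuous_on {lo..hi} \<phi>" and z1: "\<phi> lo = 0" and z2: "\<phi> hi = 0"
    and der: "\<And>y. y \<in> {lo..hi} \<Longrightarrow> \<phi> y = 0 \<Longrightarrow> (\<exists>d<0. (\<phi> has_real_derivative d) (at y within {lo..hi}))"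
  shows False
proof -
  obtain d0 where d0: "d0 < 0" "(\<phi> has_real_derivative d0) (at lo within {lo..hi})"
    using der[of lo] lh z1 by auto
  obtain e where e: "e > 0" "\<forall>h>0. lo + h \<in> {lo..hi} \<longrightarrow> h < e \<longrightarrow> \<phi> lo > \<phi> (lo + h)"
    using has_real_derivative_neg_dec_right[OF d0(2) d0(1)] by blast
  have "\<exists>t. t > 0 \<and> t < e \<and> t < hi - lo" using e lh
    by (intro exI[of _ "min e (hi - lo) / 2"]) auto
  then obtain t where t: "t > 0" "t < e" "t < hi - lo" by blast
  define m where "m = lo + t"
  have m: "lo < m" "m < hi" using t unfolding m_def by auto
  have phim: "\<phi> m < 0" using e(2)[rule_format, of t] t z1
    by (auto simp: m_def)
  define Z where "Z = {y \<in> {m..hi}. \<phi> y = 0}"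
  have cZ: "closed Z" unfolding Z_def
    by (rule continuous_closed_preimage_constant) (use cont m in \<open>auto intro: continuous_on_subset\<close>)
  have hiZ: "hi \<in> Z" using z2 m by (auto simp: Z_def)
  have bZ: "bdd_below Z" by (auto simp: Z_def bdd_below_def)
  define s where "s = Inf Z"
  have sZ: "s \<in> Z" unfolding s_def using closed_contains_Inf[OF _ bZ cZ] hiZ by auto
  have sle: "\<And>y. y \<in> Z \<Longrightarrow> s \<le> y" unfolding s_def using bZ by (simp add: cInf_lower)
  have sm: "m < s" using sZ phim by (auto simp: Z_def le_less)
  have neg: "\<phi> y < 0" if my: "m \<le> y" "y < s" for y
  proof (rule ccontr)
    assume "\<not> \<phi> y < 0"
    have cy: "continuous_on {m..y} \<phi>"
      using cont sZ m that by (auto simp: Z_def intro: continuous_on_subset)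
    obtain x where x: "m \<le> x" "x \<le> y" "\<phi> x = 0"
      using IVT'[of \<phi> m 0 y, OF _ _ _ cy] phim my \<open>\<not> \<phi> y < 0\<close> by auto
    then have "x \<in> Z" using my sZ by (auto simp: Z_def)
    then show False using sle x my by fastforce
  qed
  obtain d1 where d1: "d1 < 0" "(\<phi> has_real_derivative d1) (at s within {lo..hi})"
    using der[of s] sZ m by (auto simp: Z_def)
  obtain e1 where e1: "e1 > 0" "\<forall>h>0. s - h \<in> {lo..hi} \<longrightarrow> h < e1 \<longrightarrow> \<phi> s < \<phi> (s - h)"
    using has_real_derivative_neg_dec_left[OF d1(2) d1(1)] by blast
  have "\<exists>t. t > 0 \<and> t < e1 \<and> t < s - m" using e1 sm
    by (intro exI[of _ "min e1 (s - m) / 2"]) auto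
  then obtain h where h: "h > 0" "h < e1" "h < s - m" by blast
  have "\<phi> s < \<phi> (s - h)" using e1 h sm m sZ by (auto simp: Z_def)
  moreover have "\<phi> (s - h) < 0" using neg[of "s - h"] h by auto
  ultimately show False using sZ by (auto simp: Z_def)
qed

lemma funpow_in:
  assumes "\<forall>x\<in>I. f x \<in> I" "x \<in> I" shows "(f ^^ n) x \<in> I"
  using assms by (induction n) auto

lemma funpow_deriv:
  fixes f :: "real \<Rightarrow> real"
  assumes fi: "\<forall>x\<in>I. f x \<in> I" and fd: "\<forall>x\<in>I. (f has_real_derivative f' x) (at x within I)"
    and x: "x \<in> I"
  shows "((f ^^ n) has_real_derivative (\<Prod>j<n. f' ((f ^^ j) x))) (at x within I)"
proof (induction n)
  case 0
  then show ?case by (simp add: DERIV_ident[unfolded id_def] )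
next
  case (Suc n)
  have inI: "(f ^^ n) x \<in> I" using funpow_in[OF fi x] .
  have sub: "(f ^^ n) ` I \<subseteq> I" using funpow_in[OF fi] by auto
  have "(f \<circ> (f ^^ n) has_real_derivative f' ((f ^^ n) x) * (\<Prod>j<n. f' ((f ^^ j) x))) (at x within I)"
    by (rule DERIV_image_chain[OF DERIV_subset[OF fd[rule_format, OF inI] sub] Suc])
  then show ?case by (simp add: mult.commute o_def)
qed



lemma funpow_mono_on:
  fixes c :: "real \<Rightarrow> real"
  assumes ci: "\<forall>x\<in>I. c x \<in> I" and cm: "strict_mono_on I c"
  shows "x \<in> I \<Longrightarrow> y \<in> I \<Longrightarrow> x \<le> y \<Longrightarrow> (c^^k) x \<le> (c^^k) y"
proof (induction k)
  case 0 then show ?case by simp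
next
  case (Suc k)
  have "(c^^k) x \<in> I" "(c^^k) y \<in> I" using funpow_in[OF ci] Suc.prems by auto
  then show ?case using Suc cm by (auto simp: strict_mono_on_def le_less)
qed

lemma D1:
  fixes W c W' c' :: "real \<Rightarrow> real"
  assumes ab: "a < b"
  and Wi: "\<forall>x\<in>{a..b}. W x \<in> {a..b}"
  and Wd: "\<forall>x\<in>{a..b}. (W has_real_derivative W' x) (at x within {a..b})"
  and Wc: "continuous_on {a..b} W'"
  and ci: "\<forall>x\<in>{a..b}. c x \<in> {a..b}"
  and cd: "\<forall>x\<in>{a..b}. (c has_real_derivative c' x) (at x within {a..b})"
  and cpos: "\<forall>x\<in>{a..b}. c' x > 0"
  and cm: "strict_mono_on {a..b} c"
  and comm: "\<forall>x\<in>{a..b}. c (W x) = W (c x)"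
  and z: "z \<in> {a..b}" "W z = z" "c z \<noteq> z" "W' z < 1"
  shows False
proof -
  let ?I = "{a..b}"
  have commk: "(c^^k) (W x) = W ((c^^k) x)" if "x \<in> ?I" for k x
  proof (induction k)
    case (Suc k)
    have "(c^^k) x \<in> ?I" using funpow_in[OF ci that] .
    then show ?case using Suc comm by simp
  qed simp
  have derfix: "W' ((c^^k) y) = W' y" if y: "y \<in> ?I" "W y = y" for k y
  proof -
    define D where "D = (\<Prod>j<k. c' ((c^^j) y))"
    have Dpos: "D > 0" unfolding D_def using funpow_in[OF ci y(1)] cpos by (auto intro: prod_pos)
    have d1: "((c^^k) has_real_derivative D) (at y within ?I)" unfolding D_def
      by (rule funpow_deriv[OF ci cd y(1)])
    have ck: "(c^^k) y \<in> ?I" by (rule funpow_in[OF ci y(1)])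
    have sub: "(c^^k) ` ?I \<subseteq> ?I" using funpow_in[OF ci] by auto
    have L: "(W \<circ> (c^^k) has_real_derivative W' ((c^^k) y) * D) (at y within ?I)"
      by (rule DERIV_image_chain[OF DERIV_subset[OF Wd[rule_format, OF ck] sub] d1])
    have subW: "W ` ?I \<subseteq> ?I" using Wi by auto
    have d1': "((c^^k) has_real_derivative D) (at (W y) within W ` ?I)"
      using DERIV_subset[OF d1 subW] y(2) by simp
    have R: "((c^^k) \<circ> W has_real_derivative D * W' y) (at y within ?I)"
      by (rule DERIV_image_chain[OF d1' Wd[rule_format, OF y(1)]])
    have R': "(W \<circ> (c^^k) has_real_derivative D * W' y) (at y within ?I)"
      by (rule has_field_derivative_transform_within[OF R zero_less_one y(1)]) (simp add: commk)
    have "W' ((c^^k) y) * D = D * W' y" by (rule deriv_unique_Icc[OF ab y(1) L R'])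
    then show ?thesis using Dpos by simp
  qed
  have Wcont: "continuous_on ?I W" using Wd
    by (meson DERIV_continuous continuous_on_eq_continuous_within)
  define lo where "lo = min z (c z)"
  define hi where "hi = max z (c z)"
  have czI: "c z \<in> ?I" using ci z by auto
  have lohi: "lo < hi" using z(3) by (auto simp: lo_def hi_def min_def max_def)
  have lohiI: "{lo..hi} \<subseteq> ?I" using z czI by (auto simp: lo_def hi_def)
  have Wcz: "W (c z) = c z" using comm z by metis
  have mk: "(c^^k) x \<le> (c^^k) y" if "x \<in> ?I" "y \<in> ?I" "x \<le> y" for k x y
    using funpow_mono_on[OF ci cm that] .
  have sucz: "(c^^Suc k) z = (c^^k) (c z)" for k by (simp add: funpow_swap1)
  have bnd: "a \<le> (c^^k) z \<and> (c^^k) z \<le> b" for k using funpow_in[OF ci z(1)] by auto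
  obtain e where e: "(\<lambda>k. (c^^k) z) \<longlonglongrightarrow> e"
  proof (cases "z < c z")
    case True
    have "incseq (\<lambda>k. (c^^k) z)"
      by (rule incseq_SucI) (use mk[of z "c z"] True z czI sucz in auto)
    then show ?thesis using incseq_convergent[of "\<lambda>k. (c^^k) z" b] bnd that by blast
  next
    case False
    then have "c z < z" using z(3) by auto
    then have "decseq (\<lambda>k. (c^^k) z)"
      by (intro decseq_SucI) (use mk[of "c z" z] z czI sucz in auto)
    then show ?thesis using decseq_convergent[of "\<lambda>k. (c^^k) z" a] bnd that by blast
  qed
  have eI: "e \<in> ?I"
    using LIMSEQ_le_const[OF e, of a] LIMSEQ_le_const2[OF e, of b] bnd by auto
  have e2: "(\<lambda>k. (c^^k) (c z)) \<longlonglongrightarrow> e"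
    using LIMSEQ_Suc[OF e] by (simp add: funpow_swap1)
  have elo: "(\<lambda>k. (c^^k) lo) \<longlonglongrightarrow> e" using e e2 by (auto simp: lo_def min_def)
  have ehi: "(\<lambda>k. (c^^k) hi) \<longlonglongrightarrow> e" using e e2 by (auto simp: hi_def max_def)
  have lim: "(\<lambda>k. (c^^k) y) \<longlonglongrightarrow> e" if "y \<in> {lo..hi}" for y
  proof (rule tendsto_sandwich[OF _ _ elo ehi])
    show "\<forall>\<^sub>F k in sequentially. (c^^k) lo \<le> (c^^k) y"
      using mk[of lo y] that lohiI lohi by auto
    show "\<forall>\<^sub>F k in sequentially. (c^^k) y \<le> (c^^k) hi"
      using mk[of y hi] that lohiI lohi by auto
  qed
  have Wfix: "W' y = W' e" if y: "y \<in> {lo..hi}" "W y = y" for y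
  proof -
    have yI: "y \<in> ?I" using y lohiI by auto
    have "(\<lambda>k. W' ((c^^k) y)) \<longlonglongrightarrow> W' e"
      by (rule continuous_on_tendsto_compose[OF Wc lim[OF y(1)] eI])
        (use funpow_in[OF ci yI] in auto)
    moreover have "(\<lambda>k. W' ((c^^k) y)) = (\<lambda>k. W' y)" using derfix[OF yI y(2)] by auto
    ultimately show ?thesis using LIMSEQ_unique tendsto_const by metis
  qed
  have zlh: "z \<in> {lo..hi}" by (auto simp: lo_def hi_def)
  show False
  proof (rule no_all_neg_zeros[OF lohi, of "\<lambda>x. W x - x"])
    show "continuous_on {lo..hi} (\<lambda>x. W x - x)"
      by (intro continuous_intros continuous_on_subset[OF Wcont lohiI])
    show "W lo - lo = 0" "W hi - hi = 0" using z(2) Wcz by (auto simp: lo_def hi_def min_def max_def)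
    fix y assume y: "y \<in> {lo..hi}" "W y - y = 0"
    have yI: "y \<in> ?I" using y lohiI by auto
    have "((\<lambda>x. W x - x) has_real_derivative W' y - 1) (at y within {lo..hi})"
      by (intro derivative_intros DERIV_subset[OF Wd[rule_format, OF yI] lohiI])
    moreover have "W' y - 1 < 0" using Wfix[of y] y Wfix[OF zlh z(2)] z(4) by auto
    ultimately show "\<exists>d<0. ((\<lambda>x. W x - x) has_real_derivative d) (at y within {lo..hi})" by blast
  qed
qed



lemma mvt_I:
  fixes f f' :: "real \<Rightarrow> real"
  assumes d: "\<forall>x\<in>S. (f has_real_derivative f' x) (at x within S)" and sub: "{x..y} \<subseteq> S" and xy: "x \<le> y"
  shows "\<exists>\<xi>\<in>{x..y}. f y - f x = f' \<xi> * (y - x)"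
proof -
  have "\<exists>\<xi>\<in>{x..y}. f y - f x = (\<lambda>h. f' \<xi> * h) (y - x)"
  proof (rule mvt_very_simple[OF xy])
    fix z assume "x \<le> z" "z \<le> y"
    then have "z \<in> S" using sub by auto
    then show "(f has_derivative (\<lambda>h. f' z * h)) (at z within {x..y})"
      using DERIV_subset[OF d[rule_format] sub] by (simp add: has_field_derivative_def)
  qed
  then show ?thesis by simp
qed

lemma mvt_I2:
  fixes f f' :: "real \<Rightarrow> real"
  assumes d: "\<forall>x\<in>S. (f has_real_derivative f' x) (at x within S)" and S: "S = {a..b}"
    and x: "x \<in> S" and y: "y \<in> S"
  shows "\<exists>\<xi>\<in>{min x y..max x y}. f y - f x = f' \<xi> * (y - x)"
proof (cases "x \<le> y")
  case True
  then show ?thesis using mvt_I[OF d, of x y] x y S by (auto simp: min_def max_def)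
next
  case False
  then obtain \<xi> where "\<xi>\<in>{y..x}" "f x - f y = f' \<xi> * (x - y)"
    using mvt_I[OF d, of y x] x y S by auto
  moreover have "\<xi> \<in> {min x y..max x y}" using calculation False by (auto simp: min_def max_def)
  ultimately show ?thesis by (intro bexI[of _ \<xi>]) (auto simp: algebra_simps)
qed

lemma minmax_in:
  fixes x y \<xi> p q :: real
  shows "\<xi> \<in> {min x y..max x y} \<Longrightarrow> x \<in> {p..q} \<Longrightarrow> y \<in> {p..q} \<Longrightarrow> \<xi> \<in> {p..q}"
  by (auto simp: min_def max_def split: if_splits)

lemma deriv_pos_strict_mono:
  fixes f f' :: "real \<Rightarrow> real"
  assumes d: "\<forall>x\<in>S. (f has_real_derivative f' x) (at x within S)" and S: "S = {a..b}"
    and pos: "\<forall>x\<in>S. f' x > 0"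
  shows "strict_mono_on S f"
proof (rule strict_mono_onI)
  fix x y assume xy: "x \<in> S" "y \<in> S" "x < y"
  then obtain \<xi> where "\<xi>\<in>{x..y}" "f y - f x = f' \<xi> * (y - x)"
    using mvt_I[OF d, of x y] S by auto
  moreover have "f' \<xi> > 0" using pos calculation xy S by auto
  moreover have "f' \<xi> * (y - x) > 0" using calculation xy by simp
  ultimately show "f x < f y" by linarith
qed

lemma funpow_strict_mono_on:
  fixes c :: "real \<Rightarrow> real"
  assumes ci: "\<forall>x\<in>I. c x \<in> I" and cm: "strict_mono_on I c"
  shows "x \<in> I \<Longrightarrow> y \<in> I \<Longrightarrow> x < y \<Longrightarrow> (c^^k) x < (c^^k) y"
proof (induction k)
  case 0 then show ?case by simp
next
  case (Suc k)
  have "(c^^k) x \<in> I" "(c^^k) y \<in> I" using funpow_in[OF ci] Suc.prems by auto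
  then show ?case using Suc cm by (auto simp: strict_mono_on_def)
qed

lemma powr_pow_base:
  fixes \<theta> t :: real assumes "\<theta> > 0" shows "(\<theta> ^ j) powr t = (\<theta> powr t) ^ j"
  using assms by (induction j) (auto simp: powr_mult)

lemma D2:
  fixes W c W' c' :: "real \<Rightarrow> real"
  assumes ab: "a < b"
  and Wi: "\<forall>x\<in>{a..b}. W x \<in> {a..b}"
  and Wd: "\<forall>x\<in>{a..b}. (W has_real_derivative W' x) (at x within {a..b})"
  and Wpos: "\<forall>x\<in>{a..b}. W' x > 0"
  and Wh: "\<forall>x\<in>{a..b}. \<forall>y\<in>{a..b}. W' x \<le> W' y * exp (L * \<bar>x - y\<bar> powr t)"
  and L: "L \<ge> 0" and t: "t > 0"
  and K: "a \<le> p" "p \<le> q" "q \<le> b"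
  and WK: "\<forall>x\<in>{p..q}. W x \<in> {p..q}"
  and Wsm: "\<forall>x\<in>{p..q}. W' x \<le> \<theta>" and th: "0 < \<theta>" "\<theta> < 1"
  and ci: "\<forall>x\<in>{a..b}. c x \<in> {a..b}"
  and cd: "\<forall>x\<in>{a..b}. (c has_real_derivative c' x) (at x within {a..b})"
  and cc: "continuous_on {a..b} c'"
  and cm: "strict_mono_on {a..b} c"
  and comm: "\<forall>x\<in>{a..b}. c (W x) = W (c x)"
  and al: "p \<le> \<alpha>" "\<alpha> < y0" "y0 < \<beta>" "\<beta> \<le> q" "c \<alpha> = \<alpha>" "c \<beta> = \<beta>" "c y0 \<noteq> y0"
  shows False
proof -
  let ?I = "{a..b}"
  let ?K = "{p..q}"
  have KI: "?K \<subseteq> ?I" using K by auto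
  have commk: "c ((W^^k) x) = (W^^k) (c x)" if "x \<in> ?I" for k x
    using that
  proof (induction k)
    case (Suc k)
    have "(W^^k) x \<in> ?I" using funpow_in[OF Wi Suc.prems] .
    then show ?case using Suc comm by (simp add: ci)
  qed simp
  have WKk: "(W^^j) x \<in> ?K" if "x \<in> ?K" for j x using funpow_in[of ?K W] WK that by blast
  have lip: "\<bar>W x - W y\<bar> \<le> \<theta> * \<bar>x - y\<bar>" if "x \<in> ?K" "y \<in> ?K" for x y
  proof -
    have "x \<in> ?I" "y \<in> ?I" using that KI by auto
    then obtain \<xi> where \<xi>: "\<xi> \<in> {min x y..max x y}" "W y - W x = W' \<xi> * (y - x)"
      using mvt_I2[OF Wd refl, of x y] by auto
    have "\<xi> \<in> ?K" using minmax_in[OF \<xi>(1) that] .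
    then have "0 < W' \<xi>" "W' \<xi> \<le> \<theta>" using Wpos Wsm KI by auto
    then have "\<bar>W' \<xi> * (y - x)\<bar> \<le> \<theta> * \<bar>x - y\<bar>"
      by (simp add: abs_mult abs_minus_commute mult_right_mono)
    then show ?thesis using \<xi>(2) by (simp add: abs_minus_commute)
  qed
  have lipk: "\<bar>(W^^j) x - (W^^j) y\<bar> \<le> \<theta>^j * \<bar>x - y\<bar>" if "x \<in> ?K" "y \<in> ?K" for j x y
  proof (induction j)
    case (Suc j)
    have "\<bar>(W^^Suc j) x - (W^^Suc j) y\<bar> \<le> \<theta> * \<bar>(W^^j) x - (W^^j) y\<bar>"
      using lip[OF WKk[OF that(1)] WKk[OF that(2)]] by simp
    also have "\<dots> \<le> \<theta> * (\<theta>^j * \<bar>x - y\<bar>)" using Suc th by (simp add: mult_left_mono)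
    finally show ?case by (simp add: mult.assoc)
  qed simp
  define r where "r = \<theta> powr t"
  have r: "0 < r" "r < 1" using th t powr_less_mono2[of t \<theta> 1] by (auto simp: r_def)
  define E where "E = exp (L * ((q - p) powr t / (1 - r)))"
  have Epos: "E > 0" by (simp add: E_def)
  define D where "D m x = (\<Prod>j<m. W' ((W^^j) x))" for m x
  have Dd: "((W^^m) has_real_derivative D m x) (at x within ?I)" if "x \<in> ?I" for m x
    unfolding D_def by (rule funpow_deriv[OF Wi Wd that])
  have Dpos: "D m x > 0" if "x \<in> ?I" for m x
    unfolding D_def using funpow_in[OF Wi that] Wpos by (auto intro: prod_pos)
  have dist: "D m x \<le> D m y * E" if xy: "x \<in> ?K" "y \<in> ?K" for m x y
  proof -
    have xjI: "(W^^j) x \<in> ?I" for j using WKk[OF xy(1)] KI by blast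
    have yjI: "(W^^j) y \<in> ?I" for j using WKk[OF xy(2)] KI by blast
    have "D m x \<le> (\<Prod>j<m. W' ((W^^j) y) * exp (L * \<bar>(W^^j) x - (W^^j) y\<bar> powr t))"
      unfolding D_def
    proof (rule prod_mono)
      fix j
      show "0 \<le> W' ((W^^j) x) \<and> W' ((W^^j) x) \<le> W' ((W^^j) y) * exp (L * \<bar>(W^^j) x - (W^^j) y\<bar> powr t)"
        using Wh[rule_format, OF xjI[of j] yjI[of j]] Wpos xjI[of j] by (simp add: less_imp_le)
    qed
    also have "\<dots> = D m y * exp (L * (\<Sum>j<m. \<bar>(W^^j) x - (W^^j) y\<bar> powr t))"
      by (simp add: D_def prod.distrib exp_sum sum_distrib_left)
    also have "\<dots> \<le> D m y * E"
    proof -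
      have "(\<Sum>j<m. \<bar>(W^^j) x - (W^^j) y\<bar> powr t) \<le> (\<Sum>j<m. r^j * (q - p) powr t)"
      proof (rule sum_mono)
        fix j
        have "\<bar>(W^^j) x - (W^^j) y\<bar> \<le> \<theta>^j * (q - p)"
          using lipk[OF xy, of j] xy th by (smt (verit) atLeastAtMost_iff mult_left_mono zero_le_power)
        then have "\<bar>(W^^j) x - (W^^j) y\<bar> powr t \<le> (\<theta>^j * (q - p)) powr t"
          using t by (intro powr_mono2) auto
        also have "\<dots> = r^j * (q - p) powr t"
          using th K by (simp add: powr_mult powr_pow_base r_def)
        finally show "\<bar>(W^^j) x - (W^^j) y\<bar> powr t \<le> r^j * (q - p) powr t" .
      qed
      also have "\<dots> = (q - p) powr t * (\<Sum>j<m. r^j)" by (simp add: sum_distrib_right mult.commute)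
      also have "\<dots> \<le> (q - p) powr t / (1 - r)"
      proof -
        have "(\<Sum>j<m. r^j) = (1 - r^m) / (1 - r)" using sum_gp_strict[of r m] r by simp
        also have "\<dots> \<le> 1 / (1 - r)" using r by (simp add: divide_right_mono)
        finally show ?thesis using r by (simp add: mult_left_mono divide_inverse)
      qed
      finally have "exp (L * (\<Sum>j<m. \<bar>(W^^j) x - (W^^j) y\<bar> powr t)) \<le> E"
        unfolding E_def using L mult_left_mono[OF _ L] by (simp del: times_divide_eq_right)
      then show ?thesis using Dpos[of y m] xy KI by (simp add: mult_left_mono)
    qed
    finally show ?thesis .
  qed
  have mvtW: "\<exists>\<xi>\<in>{min x y..max x y}. (W^^m) y - (W^^m) x = D m \<xi> * (y - x)"
    if "x \<in> ?I" "y \<in> ?I" for m x y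
    using mvt_I2[of ?I "W^^m" "D m", OF _ refl that] Dd by blast
  have Wsmono: "strict_mono_on ?I W" by (rule deriv_pos_strict_mono[OF Wd refl Wpos])
  have "\<alpha> \<in> ?I" "\<beta> \<in> ?I" "y0 \<in> ?I" using al K by auto
  then have cy0: "\<alpha> < c y0" "c y0 < \<beta>"
    using cm al unfolding strict_mono_on_def by metis+
  have inK: "\<alpha> \<in> ?K" "\<beta> \<in> ?K" "y0 \<in> ?K" "c y0 \<in> ?K" using al cy0 by auto
  have inI: "\<alpha> \<in> ?I" "\<beta> \<in> ?I" "y0 \<in> ?I" "c y0 \<in> ?I" using inK KI by auto
  define d0 where "d0 = \<bar>c y0 - y0\<bar>"
  have d0: "d0 > 0" using al by (simp add: d0_def)
  define \<eta> where "\<eta> = d0 / (2 * E * (q - p + 1))"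
  have \<eta>: "\<eta> > 0" using d0 Epos K by (simp add: \<eta>_def)
  have uc: "uniformly_continuous_on ?I c'" by (rule compact_uniformly_continuous[OF cc compact_Icc])
  obtain \<delta> where \<delta>: "\<delta> > 0" "\<forall>x\<in>?I. \<forall>x'\<in>?I. dist x' x < \<delta> \<longrightarrow> dist (c' x') (c' x) < \<eta>"
    using uc \<eta> unfolding uniformly_continuous_on_def by metis
  obtain m where m: "\<theta>^m < \<delta> / (q - p + 1)"
    using real_arch_pow_inv[of "\<delta> / (q - p + 1)" \<theta>] \<delta> th K by auto
  define A where "A = (W^^m) \<alpha>"
  define B where "B = (W^^m) \<beta>"
  define T where "T = (W^^m) y0"
  have AT: "A < T" "T < B" unfolding A_def B_def T_def
    using funpow_strict_mono_on[OF Wi Wsmono] inI al by auto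
  have ABI: "A \<in> ?I" "B \<in> ?I" "T \<in> ?I" unfolding A_def B_def T_def
    using funpow_in[OF Wi] inI by auto
  have "B - A \<le> \<theta>^m * (\<beta> - \<alpha>)" using lipk[OF inK(2) inK(1), of m] AT al
    by (simp add: A_def B_def)
  also have "\<dots> \<le> \<theta>^m * (q - p + 1)" using al th by (intro mult_left_mono) auto
  also have "\<dots> < \<delta>" using m K by (simp add: pos_less_divide_eq)
  finally have BA: "B - A < \<delta>" .
  have cA: "c A = A" unfolding A_def using commk[OF inI(1)] al by simp
  have cB: "c B = B" unfolding B_def using commk[OF inI(2)] al by simp
  have ABsub: "{A..B} \<subseteq> ?I" using ABI by auto
  obtain s where s: "s \<in> {A..B}" "c B - c A = c' s * (B - A)"
    using mvt_I[OF cd ABsub] AT by auto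
  have cs: "c' s = 1" using s(2) cA cB AT by simp
  have cnear: "\<bar>c' u - 1\<bar> < \<eta>" if "u \<in> {A..B}" for u
  proof -
    have "dist u s < \<delta>" using that s(1) BA by (auto simp: dist_real_def)
    then have "dist (c' u) (c' s) < \<eta>" using \<delta>(2) that s(1) ABsub by blast
    then show ?thesis using cs by (simp add: dist_real_def)
  qed
  have psid: "\<forall>x\<in>?I. ((\<lambda>x. c x - x) has_real_derivative c' x - 1) (at x within ?I)"
    using cd by (auto intro!: derivative_intros)
  have ATsub: "{A..T} \<subseteq> ?I" using ABI by auto
  obtain \<xi> where \<xi>: "\<xi> \<in> {A..T}" "(c T - T) - (c A - A) = (c' \<xi> - 1) * (T - A)"
    using mvt_I[OF psid ATsub] AT by auto
  have "\<bar>c T - T\<bar> = \<bar>c' \<xi> - 1\<bar> * (T - A)" using \<xi>(2) cA AT by (simp add: abs_mult)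
  also have "\<dots> \<le> \<eta> * (T - A)" using cnear[of \<xi>] \<xi>(1) AT by (intro mult_right_mono) auto
  finally have cT: "\<bar>c T - T\<bar> \<le> \<eta> * (T - A)" .
  have cTe: "c T = (W^^m) (c y0)" unfolding T_def using commk[OF inI(3)] .
  obtain \<xi>1 where \<xi>1: "\<xi>1 \<in> {min y0 (c y0)..max y0 (c y0)}" "(W^^m) (c y0) - (W^^m) y0 = D m \<xi>1 * (c y0 - y0)"
    using mvtW[OF inI(3) inI(4)] by blast
  obtain \<xi>2 where \<xi>2: "\<xi>2 \<in> {min \<alpha> y0..max \<alpha> y0}" "(W^^m) y0 - (W^^m) \<alpha> = D m \<xi>2 * (y0 - \<alpha>)"
    using mvtW[OF inI(1) inI(3)] by blast
  have \<xi>1K: "\<xi>1 \<in> ?K" using minmax_in[OF \<xi>1(1) inK(3) inK(4)] .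
  have \<xi>2K: "\<xi>2 \<in> ?K" using minmax_in[OF \<xi>2(1) inK(1) inK(3)] .
  have D1p: "D m \<xi>1 > 0" using Dpos \<xi>1K KI by blast
  have D2le: "D m \<xi>2 \<le> D m \<xi>1 * E" using dist[OF \<xi>2K \<xi>1K] .
  have "D m \<xi>1 * d0 = \<bar>c T - T\<bar>"
    using \<xi>1(2) cTe D1p by (simp add: d0_def T_def abs_mult)
  also have "\<dots> \<le> \<eta> * (D m \<xi>2 * (y0 - \<alpha>))" using cT \<xi>2(2) by (simp add: T_def A_def)
  also have "\<dots> \<le> \<eta> * (D m \<xi>1 * E * (y0 - \<alpha>))"
    using D2le \<eta> al by (intro mult_left_mono mult_right_mono) auto
  finally have "D m \<xi>1 * d0 \<le> D m \<xi>1 * (\<eta> * E * (y0 - \<alpha>))" by (simp add: algebra_simps)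
  then have "d0 \<le> \<eta> * E * (y0 - \<alpha>)" using D1p by simp
  also have "\<dots> \<le> \<eta> * E * (q - p)" using al \<eta> Epos by (intro mult_left_mono) auto
  also have "\<dots> < d0"
  proof -
    have Q: "q - p + 1 > 0" using K by simp
    have "\<eta> * E = (d0 * E) / ((2 * (q - p + 1)) * E)" unfolding \<eta>_def by (simp add: ac_simps)
    also have "\<dots> = d0 / (2 * (q - p + 1))" using Epos by (rule mult_divide_mult_cancel_right[OF less_imp_neq[symmetric]])
    finally have "\<eta> * E = d0 / (2 * (q - p + 1))" .
    then have "\<eta> * E * (q - p) = d0 * ((q - p) / (2 * (q - p + 1)))" by simp
    also have "(q - p) / (2 * (q - p + 1)) < 1" using Q by (simp add: field_split_simps)
    then have "d0 * ((q - p) / (2 * (q - p + 1))) < d0 * 1" using d0 by (intro mult_strict_left_mono) auto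
    finally show ?thesis by simp
  qed
  finally show False by simp
qed



lemma sum_words_Cons:
  fixes f :: "bool list \<Rightarrow> real"
  shows "(\<Sum>ws\<in>{xs. length xs = Suc k}. f ws) = (\<Sum>ws\<in>{xs. length xs = k}. f (True # ws) + f (False # ws))"
proof -
  have eq: "{xs::bool list. length xs = Suc k} = (Cons True) ` {xs. length xs = k} \<union> (Cons False) ` {xs. length xs = k}"
  proof (rule set_eqI, rule iffI)
    fix xs :: "bool list" assume "xs \<in> {xs. length xs = Suc k}"
    then obtain s ys where "xs = s # ys" "length ys = k" by (cases xs) auto
    then show "xs \<in> (Cons True) ` {xs. length xs = k} \<union> (Cons False) ` {xs. length xs = k}"
      by (cases s) auto
  qed auto
  have fin: "finite {xs::bool list. length xs = k}"
    using finite_lists_length_eq[of "UNIV :: bool set" k] by simp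
  show ?thesis unfolding eq
    by (subst sum.union_disjoint) (auto simp: fin sum.reindex sum.distrib)
qed

lemma sum_words_snoc:
  fixes f :: "bool list \<Rightarrow> real"
  shows "(\<Sum>ws\<in>{xs. length xs = Suc k}. f ws) = (\<Sum>ws\<in>{xs. length xs = k}. f (ws @ [True]) + f (ws @ [False]))"
proof -
  have eq: "{xs::bool list. length xs = Suc k} = (\<lambda>ws. ws @ [True]) ` {xs. length xs = k} \<union> (\<lambda>ws. ws @ [False]) ` {xs. length xs = k}"
  proof (rule set_eqI, rule iffI)
    fix xs :: "bool list" assume "xs \<in> {xs. length xs = Suc k}"
    then obtain s ys where "xs = ys @ [s]" "length ys = k" by (cases xs rule: rev_cases) auto
    then show "xs \<in> (\<lambda>ws. ws @ [True]) ` {xs. length xs = k} \<union> (\<lambda>ws. ws @ [False]) ` {xs. length xs = k}"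
      by (cases s) auto
  qed auto
  have fin: "finite {xs::bool list. length xs = k}"
    using finite_lists_length_eq[of "UNIV :: bool set" k] by simp
  have inj1: "inj_on (\<lambda>ws::bool list. ws @ [True]) X" for X by (auto simp: inj_on_def)
  have inj2: "inj_on (\<lambda>ws::bool list. ws @ [False]) X" for X by (auto simp: inj_on_def)
  show ?thesis unfolding eq
    by (subst sum.union_disjoint) (auto simp: fin sum.reindex[OF inj1] sum.reindex[OF inj2] sum.distrib)
qed

lemma card_words: "card {xs::bool list. length xs = k} = 2 ^ k"
  using card_lists_length_eq[of "UNIV :: bool set" k] by simp

lemma finite_words: "finite {xs::bool list. length xs = k}"
  using finite_lists_length_eq[of "UNIV :: bool set" k] by simp

lemma powr_split_ineq:
  fixes x \<delta> t :: real
  assumes "x \<ge> 0" "\<delta> > 0" "0 < t" "t \<le> 1"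
  shows "x powr t \<le> \<delta> powr t * (x / \<delta>) + \<delta> powr t"
proof (cases "x \<le> \<delta>")
  case True
  then have "x powr t \<le> \<delta> powr t" using assms by (intro powr_mono2) auto
  moreover have "\<delta> powr t * (x / \<delta>) \<ge> 0" using assms by simp
  ultimately show ?thesis by linarith
next
  case False
  have "x = \<delta> * (x / \<delta>)" using assms by simp
  then have "x powr t = \<delta> powr t * (x / \<delta>) powr t" using assms by (metis powr_mult less_imp_le divide_nonneg_pos)
  also have "(x / \<delta>) powr t \<le> (x / \<delta>) powr 1" using False assms by (intro powr_mono) auto
  also have "\<dots> = x / \<delta>" using False assms by simp
  finally have "x powr t \<le> \<delta> powr t * (x / \<delta>)" using assms by (simp add: mult_left_mono)
  moreover have "\<delta> powr t \<ge> 0" by simp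
  ultimately show ?thesis by linarith
qed

locale pingpong =
  fixes a b p q t L :: real and A B A' B' :: "real \<Rightarrow> real"
  assumes ab: "a < b" and K: "a \<le> p" "p < q" "q \<le> b"
  and Ai: "\<forall>x\<in>{a..b}. A x \<in> {a..b}" and Bi: "\<forall>x\<in>{a..b}. B x \<in> {a..b}"
  and Ad: "\<forall>x\<in>{a..b}. (A has_real_derivative A' x) (at x within {a..b})"
  and Bd: "\<forall>x\<in>{a..b}. (B has_real_derivative B' x) (at x within {a..b})"
  and Apos: "\<forall>x\<in>{a..b}. A' x > 0" and Bpos: "\<forall>x\<in>{a..b}. B' x > 0"
  and Ah: "\<forall>x\<in>{a..b}. \<forall>y\<in>{a..b}. A' x \<le> A' y * exp (L * \<bar>x - y\<bar> powr t)"
  and Bh: "\<forall>x\<in>{a..b}. \<forall>y\<in>{a..b}. B' x \<le> B' y * exp (L * \<bar>x - y\<bar> powr t)"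
  and L: "L \<ge> 0" and t: "0 < t" "t \<le> 1"
  and AK: "\<forall>x\<in>{p..q}. A x \<in> {p..q}" and BK: "\<forall>x\<in>{p..q}. B x \<in> {p..q}"
  and AB: "A q < B p"
begin

definition sel :: "bool \<Rightarrow> real \<Rightarrow> real" where "sel s = (if s then A else B)"
definition sel' :: "bool \<Rightarrow> real \<Rightarrow> real" where "sel' s = (if s then A' else B')"

fun ev :: "bool list \<Rightarrow> real \<Rightarrow> real" where
  "ev [] = id" | "ev (s # ws) = sel s \<circ> ev ws"

fun Dw :: "bool list \<Rightarrow> real \<Rightarrow> real" where
  "Dw [] x = 1" | "Dw (s # ws) x = sel' s (ev ws x) * Dw ws x"

fun Phi :: "bool list \<Rightarrow> real" where
  "Phi [] = 0" | "Phi (s # ws) = Phi ws + (ev ws q - ev ws p) powr t"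

lemma seli: "x \<in> {a..b} \<Longrightarrow> sel s x \<in> {a..b}" using Ai Bi by (auto simp: sel_def)
lemma selK: "x \<in> {p..q} \<Longrightarrow> sel s x \<in> {p..q}" using AK BK by (auto simp: sel_def)
lemma seld: "x \<in> {a..b} \<Longrightarrow> (sel s has_real_derivative sel' s x) (at x within {a..b})"
  using Ad Bd by (auto simp: sel_def sel'_def)
lemma selpos: "x \<in> {a..b} \<Longrightarrow> sel' s x > 0" using Apos Bpos by (auto simp: sel'_def)
lemma selh: "x \<in> {a..b} \<Longrightarrow> y \<in> {a..b} \<Longrightarrow> sel' s x \<le> sel' s y * exp (L * \<bar>x - y\<bar> powr t)"
  using Ah Bh by (auto simp: sel'_def)
lemma selmono: "x \<in> {a..b} \<Longrightarrow> y \<in> {a..b} \<Longrightarrow> x < y \<Longrightarrow> sel s x < sel s y"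
proof -
  have "strict_mono_on {a..b} (sel s)"
    by (rule deriv_pos_strict_mono[of "{a..b}" "sel s" "sel' s", OF _ refl]) (use seld selpos in auto)
  then show "x \<in> {a..b} \<Longrightarrow> y \<in> {a..b} \<Longrightarrow> x < y \<Longrightarrow> sel s x < sel s y"
    by (auto simp: strict_mono_on_def)
qed

lemma evi: "x \<in> {a..b} \<Longrightarrow> ev ws x \<in> {a..b}"
  by (induction ws) (simp_all add: seli del: atLeastAtMost_iff)
lemma evK: "x \<in> {p..q} \<Longrightarrow> ev ws x \<in> {p..q}"
  by (induction ws) (simp_all add: selK del: atLeastAtMost_iff)
lemma evd: "x \<in> {a..b} \<Longrightarrow> (ev ws has_real_derivative Dw ws x) (at x within {a..b})"
proof (induction ws)
  case Nil then show ?case by (simp add: DERIV_ident[unfolded id_def] id_def)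
next
  case (Cons s ws)
  have sub: "ev ws ` {a..b} \<subseteq> {a..b}" using evi by auto
  have "(sel s \<circ> ev ws has_real_derivative sel' s (ev ws x) * Dw ws x) (at x within {a..b})"
    by (rule DERIV_image_chain[OF DERIV_subset[OF seld[OF evi[OF Cons.prems]] sub] Cons.IH[OF Cons.prems]])
  then show ?case by (simp add: o_def)
qed
lemma Dwpos: "x \<in> {a..b} \<Longrightarrow> Dw ws x > 0"
proof (induction ws)
  case (Cons s ws)
  then show ?case using selpos[OF evi[OF Cons.prems], of s] by simp
qed simp
lemma evmono: "x \<in> {a..b} \<Longrightarrow> y \<in> {a..b} \<Longrightarrow> x < y \<Longrightarrow> ev ws x < ev ws y"
proof (induction ws)
  case (Cons s ws)
  then show ?case using selmono[OF evi[of x ws] evi[of y ws]] by simp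
qed simp
lemma evmono_le: "x \<in> {a..b} \<Longrightarrow> y \<in> {a..b} \<Longrightarrow> x \<le> y \<Longrightarrow> ev ws x \<le> ev ws y"
  using evmono[of x y ws] by (cases "x = y") auto
lemma ev_snoc: "ev (ws @ [s]) = ev ws \<circ> sel s"
  by (induction ws) auto

lemma KI: "{p..q} \<subseteq> {a..b}" using K by auto

lemma len_nonneg: "ev ws q - ev ws p \<ge> 0"
  using evmono_le[of p q ws] K by auto

lemma len_nonneg': "ev ws p \<le> ev ws q"
  using len_nonneg[of ws] by simp

lemma Phi_nonneg: "Phi ws \<ge> 0"
  by (induction ws) auto

lemma distortion: "x \<in> {p..q} \<Longrightarrow> y \<in> {p..q} \<Longrightarrow> Dw ws x \<le> Dw ws y * exp (L * Phi ws)"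
proof (induction ws)
  case Nil then show ?case by simp
next
  case (Cons s ws)
  have xI: "x \<in> {a..b}" and yI: "y \<in> {a..b}" using Cons.prems KI by auto
  have exI: "ev ws x \<in> {a..b}" "ev ws y \<in> {a..b}" using evi xI yI by auto
  have "\<bar>ev ws x - ev ws y\<bar> \<le> ev ws q - ev ws p"
    using evmono_le[of p x ws] evmono_le[of x q ws] evmono_le[of p y ws] evmono_le[of y q ws] Cons.prems K xI yI
    by auto
  then have pw: "\<bar>ev ws x - ev ws y\<bar> powr t \<le> (ev ws q - ev ws p) powr t"
    using t by (intro powr_mono2) auto
  have "Dw (s # ws) x = sel' s (ev ws x) * Dw ws x" by simp
  also have "\<dots> \<le> (sel' s (ev ws y) * exp (L * \<bar>ev ws x - ev ws y\<bar> powr t)) * (Dw ws y * exp (L * Phi ws))"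
    using selh[OF exI] Cons.IH[OF Cons.prems] selpos[OF exI(1)] selpos[OF exI(2)] Dwpos[OF xI]
    by (intro mult_mono) (auto simp: less_imp_le)
  also have "\<dots> \<le> (sel' s (ev ws y) * exp (L * (ev ws q - ev ws p) powr t)) * (Dw ws y * exp (L * Phi ws))"
    using pw L selpos[OF exI(2), of s] Dwpos[OF yI, of ws]
    by (intro mult_right_mono mult_left_mono) (auto intro: mult_left_mono less_imp_le)
  also have "\<dots> = Dw (s # ws) y * exp (L * Phi (s # ws))"
    by (simp add: algebra_simps exp_add[symmetric])
  finally show ?case .
qed

lemma sum_len: "(\<Sum>ws\<in>{xs. length xs = k}. ev ws q - ev ws p) \<le> q - p"
proof (induction k)
  case 0
  have "{xs::bool list. length xs = 0} = {[]}" by auto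
  then show ?case by simp
next
  case (Suc k)
  have step: "(ev (ws @ [True]) q - ev (ws @ [True]) p) + (ev (ws @ [False]) q - ev (ws @ [False]) p)
      \<le> ev ws q - ev ws p" for ws
  proof -
    have pI: "p \<in> {a..b}" and qI: "q \<in> {a..b}" using K by auto
    have ApK: "A p \<in> {p..q}" "A q \<in> {p..q}" "B p \<in> {p..q}" "B q \<in> {p..q}" using AK BK K by auto
    then have ApI: "A p \<in> {a..b}" "A q \<in> {a..b}" "B p \<in> {a..b}" "B q \<in> {a..b}" using KI by auto
    have "ev ws p \<le> ev ws (A p)" using evmono_le[OF pI ApI(1)] ApK by auto
    moreover have "ev ws (A q) \<le> ev ws (B p)" using evmono_le[OF ApI(2) ApI(3)] AB by auto
    moreover have "ev ws (B q) \<le> ev ws q" using evmono_le[OF ApI(4) qI] ApK by auto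
    ultimately show ?thesis by (simp add: ev_snoc sel_def)
  qed
  have "(\<Sum>ws\<in>{xs. length xs = Suc k}. ev ws q - ev ws p)
      = (\<Sum>ws\<in>{xs. length xs = k}. (ev (ws @ [True]) q - ev (ws @ [True]) p) + (ev (ws @ [False]) q - ev (ws @ [False]) p))"
    by (rule sum_words_snoc)
  also have "\<dots> \<le> (\<Sum>ws\<in>{xs. length xs = k}. ev ws q - ev ws p)" by (rule sum_mono) (rule step)
  also have "\<dots> \<le> q - p" by (rule Suc.IH)
  finally show ?case .
qed

definition "rr = inverse (2 powr t)"
definition "ZZ = (q - p) powr t"
definition "MM = 2 * ZZ / (1 - rr)"

lemma rr: "0 < rr" "rr < 1"
proof -
  have "2 powr 0 < 2 powr t" using t by (intro powr_less_mono) auto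
  then have "1 < 2 powr t" by simp
  then show "0 < rr" "rr < 1" by (auto simp: rr_def inverse_less_1_iff)
qed

lemma ZZ: "ZZ > 0" using K by (simp add: ZZ_def)
lemma MM: "MM > 0" using ZZ rr by (simp add: MM_def)

lemma sum_lenpow: "(\<Sum>ws\<in>{xs. length xs = k}. (ev ws q - ev ws p) powr t) \<le> 2 * 2^k * (ZZ * rr^k)"
proof -
  define \<delta> where "\<delta> = (q - p) / 2^k"
  have \<delta>: "\<delta> > 0" using K by (simp add: \<delta>_def)
  have "(\<Sum>ws\<in>{xs. length xs = k}. (ev ws q - ev ws p) powr t)
      \<le> (\<Sum>ws\<in>{xs. length xs = k}. \<delta> powr t * ((ev ws q - ev ws p) / \<delta>) + \<delta> powr t)"
    by (rule sum_mono) (rule powr_split_ineq[OF len_nonneg \<delta> t])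
  also have "\<dots> = \<delta> powr t / \<delta> * (\<Sum>ws\<in>{xs. length xs = k}. ev ws q - ev ws p) + 2^k * \<delta> powr t"
    by (simp add: sum.distrib sum_distrib_left sum_divide_distrib card_words)
  also have "\<dots> \<le> \<delta> powr t / \<delta> * (q - p) + 2^k * \<delta> powr t"
    using sum_len \<delta> by (intro add_right_mono mult_left_mono) auto
  also have "\<dots> = 2 * 2^k * \<delta> powr t"
  proof -
    have "q - p = \<delta> * 2^k" by (simp add: \<delta>_def)
    then show ?thesis using \<delta> by simp
  qed
  also have "\<delta> powr t = ZZ * rr^k"
  proof -
    have "\<delta> powr t = (q - p) powr t / (2^k) powr t" using K by (simp add: \<delta>_def powr_divide)
    also have "((2::real)^k) powr t = (2 powr t)^k" by (rule powr_pow_base) simp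
    finally show ?thesis by (simp add: ZZ_def rr_def power_inverse divide_inverse)
  qed
  finally show ?thesis .
qed

lemma sum_Phi: "(\<Sum>ws\<in>{xs. length xs = k}. Phi ws) \<le> 2^k * MM * (1 - rr^k)"
proof (induction k)
  case 0
  have "{xs::bool list. length xs = 0} = {[]}" by auto
  then show ?case by simp
next
  case (Suc k)
  have "(\<Sum>ws\<in>{xs. length xs = Suc k}. Phi ws)
      = (\<Sum>ws\<in>{xs. length xs = k}. Phi (True # ws) + Phi (False # ws))" by (rule sum_words_Cons)
  also have "\<dots> = 2 * (\<Sum>ws\<in>{xs. length xs = k}. Phi ws) + 2 * (\<Sum>ws\<in>{xs. length xs = k}. (ev ws q - ev ws p) powr t)"
    by (simp add: sum.distrib sum_distrib_left)
  also have "\<dots> \<le> 2 * (2^k * MM * (1 - rr^k)) + 2 * (2 * 2^k * (ZZ * rr^k))"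
    using Suc.IH sum_lenpow[of k] by linarith
  also have "\<dots> = 2^Suc k * MM * (1 - rr^Suc k)"
  proof -
    have h: "2 * ZZ = MM * (1 - rr)" using rr by (simp add: MM_def)
    have "2 * (2 * 2^k * (ZZ * rr^k)) = 2 * 2^k * ((2 * ZZ) * rr^k)" by (simp add: ac_simps)
    also have "\<dots> = 2 * 2^k * (MM * (1 - rr) * rr^k)" by (simp add: h)
    finally have e: "2 * (2 * 2^k * (ZZ * rr^k)) = 2 * 2^k * (MM * (1 - rr) * rr^k)" .
    show ?thesis unfolding e by (simp add: algebra_simps)
  qed
  finally show ?case .
qed

lemma good_word:
  assumes e: "\<epsilon> > 0"
  shows "\<exists>ws. ev ws q - ev ws p \<le> \<epsilon> \<and> Phi ws \<le> 2 * MM"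
proof (rule ccontr)
  assume nex: "\<not> ?thesis"
  obtain k where k: "2 * (q - p) / \<epsilon> < 2^k" using real_arch_pow[of 2 "2 * (q - p) / \<epsilon>"] by auto
  define W where "W = {xs::bool list. length xs = k}"
  define B1 where "B1 = {ws\<in>W. ev ws q - ev ws p > \<epsilon>}"
  define B2 where "B2 = {ws\<in>W. Phi ws > 2 * MM}"
  have fW: "finite W" by (simp add: W_def finite_words)
  have "W \<subseteq> B1 \<union> B2" using nex by (auto simp: B1_def B2_def not_le)
  then have "card W \<le> card (B1 \<union> B2)" using fW by (intro card_mono) (auto simp: B1_def B2_def)
  also have "\<dots> \<le> card B1 + card B2" by (rule card_Un_le)
  finally have c: "(2::real)^k \<le> real (card B1) + real (card B2)"
    by (simp add: W_def card_words flip: of_nat_add)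
  have "real (card B1) * \<epsilon> \<le> (\<Sum>ws\<in>B1. ev ws q - ev ws p)"
    by (rule sum_bounded_below) (auto simp: B1_def less_imp_le)
  also have "\<dots> \<le> (\<Sum>ws\<in>W. ev ws q - ev ws p)"
    by (rule sum_mono2[OF fW]) (auto simp: B1_def len_nonneg')
  also have "\<dots> \<le> q - p" unfolding W_def by (rule sum_len)
  finally have "real (card B1) * \<epsilon> \<le> q - p" .
  moreover have k': "2 * (q - p) < 2^k * \<epsilon>" using k e by (simp add: pos_divide_less_eq)
  ultimately have "\<epsilon> * (real (card B1) * 2) < \<epsilon> * 2^k" by (simp add: algebra_simps)
  then have c1: "real (card B1) * 2 < 2^k" using e by simp
  have "real (card B2) * (2 * MM) \<le> (\<Sum>ws\<in>B2. Phi ws)"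
    by (rule sum_bounded_below) (auto simp: B2_def less_imp_le)
  also have "\<dots> \<le> (\<Sum>ws\<in>W. Phi ws)"
    by (rule sum_mono2[OF fW]) (auto simp: B2_def Phi_nonneg)
  also have "\<dots> \<le> 2^k * MM * (1 - rr^k)" unfolding W_def by (rule sum_Phi)
  also have "\<dots> < 2^k * MM" using MM rr by simp
  finally have "real (card B2) * 2 < 2^k" using MM by (simp add: field_simps)
  with c1 c show False by linarith
qed

lemma contracting_word: "\<exists>ws. \<forall>x\<in>{p..q}. Dw ws x \<le> 1/2"
proof -
  define \<epsilon> where "\<epsilon> = (q - p) / (2 * exp (L * (2 * MM)))"
  have e: "\<epsilon> > 0" using K by (simp add: \<epsilon>_def)
  obtain ws where ws: "ev ws q - ev ws p \<le> \<epsilon>" "Phi ws \<le> 2 * MM" using good_word[OF e] by blast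
  have sub: "{p..q} \<subseteq> {a..b}" using KI .
  obtain \<xi> where \<xi>: "\<xi> \<in> {p..q}" "ev ws q - ev ws p = Dw ws \<xi> * (q - p)"
    using mvt_I[of "{a..b}" "ev ws" "Dw ws" p q] evd sub K by auto
  have D\<xi>: "Dw ws \<xi> \<le> \<epsilon> / (q - p)" using \<xi>(2) ws(1) K by (simp add: field_simps)
  show ?thesis
  proof (intro exI ballI)
    fix x assume x: "x \<in> {p..q}"
    have "Dw ws x \<le> Dw ws \<xi> * exp (L * Phi ws)" by (rule distortion[OF x \<xi>(1)])
    also have "\<dots> \<le> Dw ws \<xi> * exp (L * (2 * MM))"
      using ws(2) L Dwpos[of \<xi> ws] \<xi>(1) sub by (intro mult_left_mono) (auto intro: mult_left_mono)
    also have "\<dots> \<le> \<epsilon> / (q - p) * exp (L * (2 * MM))" using D\<xi> by (intro mult_right_mono) auto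
    also have "\<dots> = 1/2" using K by (simp add: \<epsilon>_def)
    finally show "Dw ws x \<le> 1/2" .
  qed
qed

end



lemma holder_cont:
  fixes h' :: "real \<Rightarrow> real"
  assumes tau: "\<tau> > 0" and H: "\<forall>x\<in>I. \<forall>y\<in>I. \<bar>h' x - h' y\<bar> \<le> C * \<bar>x - y\<bar> powr \<tau>"
  shows "continuous_on I h'"
proof (unfold continuous_on_iff, intro ballI allI impI)
  fix x e :: real assume x: "x \<in> I" and e: "0 < e"
  define C' where "C' = max C 1"
  have C': "C' > 0" "C \<le> C'" by (auto simp: C'_def)
  define d where "d = (e / C') powr (1 / \<tau>)"
  have d: "d > 0" using e C' by (simp add: d_def)
  have dp: "d powr \<tau> = e / C'" using e C' tau by (simp add: d_def powr_powr)
  show "\<exists>d>0. \<forall>x'\<in>I. dist x' x < d \<longrightarrow> dist (h' x') (h' x) < e"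
  proof (intro exI conjI ballI impI)
    show "d > 0" by (rule d)
    fix x' assume x': "x' \<in> I" "dist x' x < d"
    have "\<bar>h' x' - h' x\<bar> \<le> C * \<bar>x' - x\<bar> powr \<tau>" using H x x' by blast
    also have "\<dots> \<le> C' * \<bar>x' - x\<bar> powr \<tau>" using C' by (intro mult_right_mono) auto
    also have "\<dots> < C' * d powr \<tau>"
      using x' tau C' by (intro mult_strict_left_mono powr_less_mono2) (auto simp: dist_real_def)
    also have "\<dots> = e" using dp C' by simp
    finally show "dist (h' x') (h' x) < e" by (simp add: dist_real_def)
  qed
qed

lemma diff_facts:
  fixes h :: "real \<Rightarrow> real"
  assumes ab: "a < b" and tau: "\<tau> > 0" and h: "h \<in> Diff_1_tau {a..b} \<tau>"
  shows "\<exists>h' L. (\<forall>x\<in>{a..b}. (h has_real_derivative h' x) (at x within {a..b}))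
     \<and> (\<forall>x\<in>{a..b}. h' x > 0) \<and> continuous_on {a..b} h' \<and> L \<ge> 0
     \<and> (\<forall>x\<in>{a..b}. \<forall>y\<in>{a..b}. h' x \<le> h' y * exp (L * \<bar>x - y\<bar> powr (min \<tau> 1)))"
proof -
  let ?I = "{a..b}"
  let ?t = "min \<tau> 1"
  obtain h' C where d: "\<forall>x\<in>?I. (h has_real_derivative h' x) (at x within ?I) \<and> h' x > 0"
    and H: "\<forall>x\<in>?I. \<forall>y\<in>?I. \<bar>h' x - h' y\<bar> \<le> C * \<bar>x - y\<bar> powr \<tau>"
    using h unfolding Diff_1_tau_def by blast
  have cont: "continuous_on ?I h'" by (rule holder_cont[OF tau H])
  obtain x0 where x0: "x0 \<in> ?I" "\<forall>y\<in>?I. h' x0 \<le> h' y"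
    using continuous_attains_inf[OF compact_Icc _ cont] ab by auto
  define m0 where "m0 = h' x0"
  have m0: "m0 > 0" using d x0 by (auto simp: m0_def)
  define C' where "C' = max C 1"
  have C': "C' > 0" "C \<le> C'" by (auto simp: C'_def)
  define C2 where "C2 = C' * (b - a + 1) powr (\<tau> - ?t)"
  have C2: "C2 > 0" using C' ab by (simp add: C2_def)
  have H2: "\<bar>h' x - h' y\<bar> \<le> C2 * \<bar>x - y\<bar> powr ?t" if xy: "x \<in> ?I" "y \<in> ?I" for x y
  proof -
    have "\<bar>h' x - h' y\<bar> \<le> C * \<bar>x - y\<bar> powr \<tau>" using H xy by blast
    also have "\<dots> \<le> C' * \<bar>x - y\<bar> powr \<tau>" using C' by (intro mult_right_mono) auto
    also have "\<bar>x - y\<bar> powr \<tau> = \<bar>x - y\<bar> powr (\<tau> - ?t) * \<bar>x - y\<bar> powr ?t"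
    proof (cases "x = y")
      case True then show ?thesis using tau by simp
    next
      case False then show ?thesis by (simp add: powr_add[symmetric])
    qed
    also have "\<bar>x - y\<bar> powr (\<tau> - ?t) \<le> (b - a + 1) powr (\<tau> - ?t)"
      using xy by (intro powr_mono2) auto
    finally show ?thesis using C' by (simp add: C2_def mult_right_mono mult_left_mono mult.assoc)
  qed
  define L where "L = C2 / m0"
  have L: "L \<ge> 0" using C2 m0 by (simp add: L_def)
  have "h' x \<le> h' y * exp (L * \<bar>x - y\<bar> powr ?t)" if xy: "x \<in> ?I" "y \<in> ?I" for x y
  proof -
    have my: "m0 \<le> h' y" using x0 xy by (simp add: m0_def)
    have "h' x \<le> h' y + C2 * \<bar>x - y\<bar> powr ?t" using H2[OF xy] by linarith
    also have "C2 * \<bar>x - y\<bar> powr ?t \<le> h' y * (L * \<bar>x - y\<bar> powr ?t)"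
    proof -
      have "C2 * \<bar>x - y\<bar> powr ?t = m0 * (L * \<bar>x - y\<bar> powr ?t)" using m0 by (simp add: L_def)
      also have "\<dots> \<le> h' y * (L * \<bar>x - y\<bar> powr ?t)" using my L by (intro mult_right_mono) auto
      finally show ?thesis .
    qed
    also have "h' y + h' y * (L * \<bar>x - y\<bar> powr ?t) = h' y * (1 + L * \<bar>x - y\<bar> powr ?t)"
      by (simp add: algebra_simps)
    also have "\<dots> \<le> h' y * exp (L * \<bar>x - y\<bar> powr ?t)"
      using d xy by (intro mult_left_mono exp_ge_add_one_self) (auto simp: less_imp_le)
    finally show ?thesis by simp
  qed
  then show ?thesis using d cont L by blast
qed



locale setting =
  fixes a b \<tau> :: real and G :: "(real \<Rightarrow> real) set" and c :: "real \<Rightarrow> real"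
  assumes ab: "a < b" and tau: "\<tau> > 0"
    and sg: "diff_subgroup {a..b} \<tau> G" and cen: "in_center {a..b} G c"
begin

lemma G_Diff: "h \<in> G \<Longrightarrow> h \<in> Diff_1_tau {a..b} \<tau>"
  using sg by (auto simp: diff_subgroup_def)

lemma G_bij: "h \<in> G \<Longrightarrow> bij_betw h {a..b} {a..b}"
  using G_Diff by (auto simp: Diff_1_tau_def)

lemma G_maps: "h \<in> G \<Longrightarrow> x \<in> {a..b} \<Longrightarrow> h x \<in> {a..b}"
  using G_bij bij_betwE by blast

lemma G_surj: "h \<in> G \<Longrightarrow> h ` {a..b} = {a..b}"
  using G_bij bij_betw_imp_surj_on by blast

lemma G_inj: "h \<in> G \<Longrightarrow> inj_on h {a..b}"
  using G_bij bij_betw_imp_inj_on by blast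

lemma G_deriv: "h \<in> G \<Longrightarrow> \<exists>h' L. (\<forall>x\<in>{a..b}. (h has_real_derivative h' x) (at x within {a..b}))
     \<and> (\<forall>x\<in>{a..b}. h' x > 0) \<and> continuous_on {a..b} h' \<and> L \<ge> 0
     \<and> (\<forall>x\<in>{a..b}. \<forall>y\<in>{a..b}. h' x \<le> h' y * exp (L * \<bar>x - y\<bar> powr (min \<tau> 1)))"
  using diff_facts[OF ab tau G_Diff] by blast

lemma G_smono: "h \<in> G \<Longrightarrow> strict_mono_on {a..b} h"
proof -
  assume h: "h \<in> G"
  obtain h' where "\<forall>x\<in>{a..b}. (h has_real_derivative h' x) (at x within {a..b})" "\<forall>x\<in>{a..b}. h' x > 0"
    using G_deriv[OF h] by blast
  then show ?thesis using deriv_pos_strict_mono[OF _ refl] by blast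
qed

lemma G_less: "h \<in> G \<Longrightarrow> x \<in> {a..b} \<Longrightarrow> y \<in> {a..b} \<Longrightarrow> x < y \<Longrightarrow> h x < h y"
  using G_smono by (auto simp: strict_mono_on_def)

lemma G_le: "h \<in> G \<Longrightarrow> x \<in> {a..b} \<Longrightarrow> y \<in> {a..b} \<Longrightarrow> x \<le> y \<Longrightarrow> h x \<le> h y"
  using G_less by (cases "x = y") (auto simp: le_less)

lemma G_less_iff: "h \<in> G \<Longrightarrow> x \<in> {a..b} \<Longrightarrow> y \<in> {a..b} \<Longrightarrow> h x < h y \<longleftrightarrow> x < y"
  using G_less G_le by (meson not_le)

lemma G_cont: "h \<in> G \<Longrightarrow> continuous_on {a..b} h"
proof -
  assume h: "h \<in> G"
  obtain h' where "\<forall>x\<in>{a..b}. (h has_real_derivative h' x) (at x within {a..b})"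
    using G_deriv[OF h] by blast
  then show ?thesis by (meson DERIV_continuous continuous_on_eq_continuous_within)
qed

lemma G_id: "\<exists>e\<in>G. \<forall>x\<in>{a..b}. e x = x" using sg by (auto simp: diff_subgroup_def)
lemma G_comp: "h1 \<in> G \<Longrightarrow> h2 \<in> G \<Longrightarrow> \<exists>h\<in>G. \<forall>x\<in>{a..b}. h x = h1 (h2 x)"
  using sg by (auto simp: diff_subgroup_def)
lemma G_inv: "h \<in> G \<Longrightarrow> \<exists>h2\<in>G. \<forall>x\<in>{a..b}. h2 x = inv_into {a..b} h x"
  using sg by (auto simp: diff_subgroup_def)

lemma inv_right: "h \<in> G \<Longrightarrow> x \<in> {a..b} \<Longrightarrow> h (inv_into {a..b} h x) = x"
  using G_surj by (metis f_inv_into_f)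
lemma inv_left: "h \<in> G \<Longrightarrow> x \<in> {a..b} \<Longrightarrow> inv_into {a..b} h (h x) = x"
  using G_inj by (metis inv_into_f_f)
lemma inv_maps: "h \<in> G \<Longrightarrow> x \<in> {a..b} \<Longrightarrow> inv_into {a..b} h x \<in> {a..b}"
  using G_surj by (metis inv_into_into)

lemma G_pow: "h \<in> G \<Longrightarrow> \<exists>h2\<in>G. \<forall>x\<in>{a..b}. h2 x = (h^^n) x"
proof (induction n)
  case 0 then show ?case using G_id by simp
next
  case (Suc n)
  then obtain h2 where h2: "h2 \<in> G" "\<forall>x\<in>{a..b}. h2 x = (h^^n) x" by blast
  obtain h3 where "h3 \<in> G" "\<forall>x\<in>{a..b}. h3 x = h (h2 x)" using G_comp[OF Suc.prems h2(1)] by blast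
  then show ?case using h2 by auto
qed

lemma c_G: "c \<in> G" using cen by (simp add: in_center_def)
lemma comm: "h \<in> G \<Longrightarrow> x \<in> {a..b} \<Longrightarrow> c (h x) = h (c x)"
  using cen by (simp add: in_center_def)

lemma rep_funpow: "(\<forall>x\<in>{a..b}. h2 x = \<sigma> x) \<Longrightarrow> (\<forall>x\<in>{a..b}. \<sigma> x \<in> {a..b}) \<Longrightarrow> x \<in> {a..b} \<Longrightarrow> (h2^^n) x = (\<sigma>^^n) x"
proof (induction n)
  case (Suc n)
  have "(\<sigma>^^n) x \<in> {a..b}" using funpow_in[of "{a..b}" \<sigma>] Suc.prems by blast
  then show ?case using Suc by simp
qed simp

lemma ipow_in: "h \<in> G \<Longrightarrow> x \<in> {a..b} \<Longrightarrow> ipow {a..b} h n x \<in> {a..b}"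
  unfolding ipow_def using funpow_in[of "{a..b}" h] funpow_in[of "{a..b}" "inv_into {a..b} h"]
    G_maps inv_maps by auto

lemma inv_smono: "h \<in> G \<Longrightarrow> strict_mono_on {a..b} (inv_into {a..b} h)"
proof (rule strict_mono_onI)
  fix x y assume h: "h \<in> G" and xy: "x \<in> {a..b}" "y \<in> {a..b}" "x < y"
  show "inv_into {a..b} h x < inv_into {a..b} h y"
  proof (rule ccontr)
    assume "\<not> ?thesis"
    then have "h (inv_into {a..b} h y) \<le> h (inv_into {a..b} h x)"
      using G_le[OF h inv_maps[OF h xy(2)] inv_maps[OF h xy(1)]] by auto
    then show False using inv_right[OF h] xy by auto
  qed
qed

lemma ipow_mono: "h \<in> G \<Longrightarrow> x \<in> {a..b} \<Longrightarrow> y \<in> {a..b} \<Longrightarrow> x \<le> y \<Longrightarrow> ipow {a..b} h n x \<le> ipow {a..b} h n y"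
  unfolding ipow_def
  using funpow_mono_on[of "{a..b}" h] funpow_mono_on[of "{a..b}" "inv_into {a..b} h"]
    G_maps inv_maps G_smono inv_smono by auto

lemma ipow_fix: "h \<in> G \<Longrightarrow> r \<in> {a..b} \<Longrightarrow> h r = r \<Longrightarrow> ipow {a..b} h n r = r"
proof -
  assume h: "h \<in> G" and r: "r \<in> {a..b}" "h r = r"
  have ir: "inv_into {a..b} h r = r" using inv_left[OF h r(1)] r(2) by simp
  have "(h^^k) r = r" for k by (induction k) (auto simp: r(2))
  moreover have "(inv_into {a..b} h ^^ k) r = r" for k by (induction k) (auto simp: ir)
  ultimately show ?thesis by (simp add: ipow_def)
qed

lemma ipow_succ: "h \<in> G \<Longrightarrow> x \<in> {a..b} \<Longrightarrow> h (ipow {a..b} h n x) = ipow {a..b} h (n + 1) x"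
proof -
  assume h: "h \<in> G" and x: "x \<in> {a..b}"
  show ?thesis
  proof (cases "n \<ge> 0")
    case True
    then have "nat (n + 1) = Suc (nat n)" by simp
    then show ?thesis using True by (simp add: ipow_def)
  next
    case False
    define m where "m = nat (- n - 1)"
    have nm: "nat (- n) = Suc m" using False by (simp add: m_def)
    have i: "(inv_into {a..b} h ^^ m) x \<in> {a..b}" using funpow_in[of "{a..b}" "inv_into {a..b} h"] inv_maps[OF h] x by blast
    have "h (ipow {a..b} h n x) = (inv_into {a..b} h ^^ m) x"
      using False nm inv_right[OF h i] by (simp add: ipow_def)
    also have "\<dots> = ipow {a..b} h (n + 1) x"
    proof (cases "n + 1 \<ge> 0")
      case True
      then have "n = -1" using False by simp
      then show ?thesis by (simp add: ipow_def m_def)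
    next
      case False
      then show ?thesis by (simp add: ipow_def m_def nat_diff_distrib)
    qed
    finally show ?thesis .
  qed
qed

end



lemma orbit_sup_fixed:
  fixes \<sigma> :: "real \<Rightarrow> real" and Orb :: "real set"
  assumes cont: "continuous_on {a..b} \<sigma>"
    and mono: "\<And>x y. x \<in> {a..b} \<Longrightarrow> y \<in> {a..b} \<Longrightarrow> x \<le> y \<Longrightarrow> \<sigma> x \<le> \<sigma> y"
    and Orb: "Orb \<subseteq> {a..b}" "Orb \<noteq> {}" and inv1: "\<And>ob. ob \<in> Orb \<Longrightarrow> \<sigma> ob \<in> Orb"
    and inv2: "\<And>ob. ob \<in> Orb \<Longrightarrow> \<exists>ob'\<in>Orb. ob = \<sigma> ob'"
  shows "Sup Orb \<in> {a..b} \<and> \<sigma> (Sup Orb) = Sup Orb"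
proof -
  have bdd: "bdd_above Orb" by (rule bdd_aboveI[of _ b]) (use Orb in auto)
  define S where "S = Sup Orb"
  have up: "ob \<le> S" if "ob \<in> Orb" for ob using cSup_upper[OF that bdd] by (simp add: S_def)
  obtain o0 where o0: "o0 \<in> Orb" using Orb by auto
  have SI: "S \<in> {a..b}"
  proof -
    have "a \<le> S" using up[OF o0] o0 Orb by auto
    moreover have "S \<le> b" unfolding S_def using Orb by (intro cSup_least) auto
    ultimately show ?thesis by simp
  qed
  have ge: "S \<le> \<sigma> S" unfolding S_def
  proof (rule cSup_least[OF Orb(2)])
    fix ob assume ob: "ob \<in> Orb"
    then obtain ob' where ob': "ob' \<in> Orb" "ob = \<sigma> ob'" using inv2 by blast
    then show "ob \<le> \<sigma> (Sup Orb)" using mono[of ob' S] up[OF ob'(1)] Orb SI by (auto simp: S_def)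
  qed
  have le: "\<sigma> S \<le> S"
  proof (rule ccontr)
    assume "\<not> \<sigma> S \<le> S"
    then have gt: "\<sigma> S - S > 0" by simp
    have "\<exists>d>0. \<forall>x'\<in>{a..b}. dist x' S < d \<longrightarrow> dist (\<sigma> x') (\<sigma> S) < \<sigma> S - S"
      using cont SI gt unfolding continuous_on_iff by blast
    then obtain d where d: "d > 0" "\<forall>x'\<in>{a..b}. dist x' S < d \<longrightarrow> dist (\<sigma> x') (\<sigma> S) < \<sigma> S - S"
      by blast
    obtain ob where ob: "ob \<in> Orb" "S - d < ob" using less_cSupD[OF Orb(2), of "S - d"] d by (auto simp: S_def)
    have "dist ob S < d" using ob up[OF ob(1)] by (auto simp: dist_real_def)
    then have "dist (\<sigma> ob) (\<sigma> S) < \<sigma> S - S" using d ob Orb by auto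
    then have "\<sigma> ob > S" by (auto simp: dist_real_def)
    moreover have "\<sigma> ob \<le> S" using up inv1 ob by blast
    ultimately show False by simp
  qed
  show ?thesis using SI ge le by (simp add: S_def)
qed

lemma orbit_inf_fixed:
  fixes \<sigma> :: "real \<Rightarrow> real" and Orb :: "real set"
  assumes cont: "continuous_on {a..b} \<sigma>"
    and mono: "\<And>x y. x \<in> {a..b} \<Longrightarrow> y \<in> {a..b} \<Longrightarrow> x \<le> y \<Longrightarrow> \<sigma> x \<le> \<sigma> y"
    and Orb: "Orb \<subseteq> {a..b}" "Orb \<noteq> {}" and inv1: "\<And>ob. ob \<in> Orb \<Longrightarrow> \<sigma> ob \<in> Orb"
    and inv2: "\<And>ob. ob \<in> Orb \<Longrightarrow> \<exists>ob'\<in>Orb. ob = \<sigma> ob'"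
  shows "Inf Orb \<in> {a..b} \<and> \<sigma> (Inf Orb) = Inf Orb"
proof -
  have bdd: "bdd_below Orb" by (rule bdd_belowI[of _ a]) (use Orb in auto)
  define S where "S = Inf Orb"
  have up: "S \<le> ob" if "ob \<in> Orb" for ob using cInf_lower[OF that bdd] by (simp add: S_def)
  obtain o0 where o0: "o0 \<in> Orb" using Orb by auto
  have SI: "S \<in> {a..b}"
  proof -
    have "S \<le> b" using up[OF o0] o0 Orb by auto
    moreover have "a \<le> S" unfolding S_def using Orb by (intro cInf_greatest) auto
    ultimately show ?thesis by simp
  qed
  have ge: "\<sigma> S \<le> S" unfolding S_def
  proof (rule cInf_greatest[OF Orb(2)])
    fix ob assume ob: "ob \<in> Orb"
    then obtain ob' where ob': "ob' \<in> Orb" "ob = \<sigma> ob'" using inv2 by blast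
    then show "\<sigma> (Inf Orb) \<le> ob" using mono[of S ob'] up[OF ob'(1)] Orb SI by (auto simp: S_def)
  qed
  have le: "S \<le> \<sigma> S"
  proof (rule ccontr)
    assume "\<not> S \<le> \<sigma> S"
    then have gt: "S - \<sigma> S > 0" by simp
    have "\<exists>d>0. \<forall>x'\<in>{a..b}. dist x' S < d \<longrightarrow> dist (\<sigma> x') (\<sigma> S) < S - \<sigma> S"
      using cont SI gt unfolding continuous_on_iff by blast
    then obtain d where d: "d > 0" "\<forall>x'\<in>{a..b}. dist x' S < d \<longrightarrow> dist (\<sigma> x') (\<sigma> S) < S - \<sigma> S"
      by blast
    obtain ob where ob: "ob \<in> Orb" "ob < S + d" using cInf_lessD[OF Orb(2), of "S + d"] d by (auto simp: S_def)
    have "dist ob S < d" using ob up[OF ob(1)] by (auto simp: dist_real_def)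
    then have "dist (\<sigma> ob) (\<sigma> S) < S - \<sigma> S" using d ob Orb by auto
    then have "\<sigma> ob < S" by (auto simp: dist_real_def)
    moreover have "S \<le> \<sigma> ob" using up inv1 ob by blast
    ultimately show False by simp
  qed
  show ?thesis using SI ge le by (simp add: S_def)
qed

lemma attract_down:
  fixes \<sigma> :: "real \<Rightarrow> real"
  assumes cont: "continuous_on {a..b} \<sigma>" and si: "\<And>x. x \<in> {a..b} \<Longrightarrow> \<sigma> x \<in> {a..b}"
    and sm: "\<And>x y. x \<in> {a..b} \<Longrightarrow> y \<in> {a..b} \<Longrightarrow> x < y \<Longrightarrow> \<sigma> x < \<sigma> y"
    and PQ: "a \<le> P" "P < Q" "Q \<le> b" and fP: "\<sigma> P = P" and fQ: "\<sigma> Q < Q"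
    and nf: "\<And>x. P < x \<Longrightarrow> x \<le> Q \<Longrightarrow> \<sigma> x \<noteq> x" and e: "\<epsilon> > 0"
  shows "\<exists>n. (\<sigma>^^n) Q < P + \<epsilon>"
proof -
  have below: "\<sigma> x < x" if x: "P < x" "x \<le> Q" for x
  proof (rule ccontr)
    assume "\<not> \<sigma> x < x"
    then have "(\<lambda>y. \<sigma> y - y) Q \<le> 0" "0 \<le> (\<lambda>y. \<sigma> y - y) x" using fQ by auto
    moreover have "continuous_on {x..Q} (\<lambda>y. \<sigma> y - y)"
      using x PQ by (intro continuous_intros continuous_on_subset[OF cont]) auto
    ultimately obtain r where "x \<le> r" "r \<le> Q" "\<sigma> r - r = 0" using IVT2'[of "\<lambda>y. \<sigma> y - y" Q 0 x] x by auto
    then show False using nf[of r] x by auto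
  qed
  define s where "s n = (\<sigma>^^n) Q" for n
  have sb: "P < s n \<and> s n \<le> Q" for n
  proof (induction n)
    case 0 then show ?case using PQ by (simp add: s_def)
  next
    case (Suc n)
    have I: "s n \<in> {a..b}" "P \<in> {a..b}" using Suc PQ by auto
    have "\<sigma> (s n) > P" using sm[OF I(2) I(1)] Suc fP by simp
    moreover have "\<sigma> (s n) < s n" using below Suc by blast
    ultimately show ?case using Suc by (simp add: s_def)
  qed
  have sI: "s n \<in> {a..b}" for n using sb[of n] PQ by auto
  have ssuc: "s (Suc n) = \<sigma> (s n)" for n by (simp add: s_def)
  have "decseq s" by (rule decseq_SucI) (use below sb ssuc in \<open>auto intro: less_imp_le\<close>)
  moreover have "\<forall>i. P \<le> s i" using sb less_imp_le by blast
  ultimately obtain l where l: "s \<longlonglongrightarrow> l" "\<forall>n. l \<le> s n"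
    using decseq_convergent[of s P] by blast
  have lP: "P \<le> l" using LIMSEQ_le_const[OF l(1), of P] sb by (auto intro: less_imp_le)
  have lQ: "l \<le> Q" using l(2) sb[of 0] by (meson order.trans)
  have lI: "l \<in> {a..b}" using lP lQ PQ by auto
  have "(\<lambda>n. \<sigma> (s n)) \<longlonglongrightarrow> \<sigma> l"
    by (rule continuous_on_tendsto_compose[OF cont l(1) lI]) (use sI in auto)
  moreover have "(\<lambda>n. \<sigma> (s n)) \<longlonglongrightarrow> l" using LIMSEQ_Suc[OF l(1)] ssuc by simp
  ultimately have "\<sigma> l = l" using LIMSEQ_unique by blast
  then have "l = P" using nf[of l] lP lQ by fastforce
  then have "\<forall>\<^sub>F n in sequentially. s n < P + \<epsilon>" using order_tendstoD(2)[OF l(1)] e by simp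
  then obtain n where "s n < P + \<epsilon>" unfolding eventually_sequentially by blast
  then show ?thesis by (auto simp: s_def)
qed

lemma attract_up:
  fixes \<sigma> :: "real \<Rightarrow> real"
  assumes cont: "continuous_on {a..b} \<sigma>" and si: "\<And>x. x \<in> {a..b} \<Longrightarrow> \<sigma> x \<in> {a..b}"
    and sm: "\<And>x y. x \<in> {a..b} \<Longrightarrow> y \<in> {a..b} \<Longrightarrow> x < y \<Longrightarrow> \<sigma> x < \<sigma> y"
    and PQ: "a \<le> P" "P < Q" "Q \<le> b" and fQ: "\<sigma> Q = Q" and fP: "P < \<sigma> P"
    and nf: "\<And>x. P \<le> x \<Longrightarrow> x < Q \<Longrightarrow> \<sigma> x \<noteq> x" and e: "\<epsilon> > 0"
  shows "\<exists>n. Q - \<epsilon> < (\<sigma>^^n) P"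
proof -
  have above: "x < \<sigma> x" if x: "P \<le> x" "x < Q" for x
  proof (rule ccontr)
    assume "\<not> x < \<sigma> x"
    then have "(\<lambda>y. \<sigma> y - y) x \<le> 0" "0 \<le> (\<lambda>y. \<sigma> y - y) P" using fP by auto
    moreover have "continuous_on {P..x} (\<lambda>y. \<sigma> y - y)"
      using x PQ by (intro continuous_intros continuous_on_subset[OF cont]) auto
    ultimately obtain r where "P \<le> r" "r \<le> x" "\<sigma> r - r = 0" using IVT2'[of "\<lambda>y. \<sigma> y - y" x 0 P] x by auto
    then show False using nf[of r] x by auto
  qed
  define s where "s n = (\<sigma>^^n) P" for n
  have sb: "P \<le> s n \<and> s n < Q" for n
  proof (induction n)
    case 0 then show ?case using PQ by (simp add: s_def)
  next
    case (Suc n)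
    have I: "s n \<in> {a..b}" "Q \<in> {a..b}" using Suc PQ by auto
    have "\<sigma> (s n) < Q" using sm[OF I(1) I(2)] Suc fQ by simp
    moreover have "s n < \<sigma> (s n)" using above Suc by blast
    ultimately show ?case using Suc by (simp add: s_def)
  qed
  have sI: "s n \<in> {a..b}" for n using sb[of n] PQ by auto
  have ssuc: "s (Suc n) = \<sigma> (s n)" for n by (simp add: s_def)
  have "incseq s" by (rule incseq_SucI) (use above sb ssuc in \<open>auto intro: less_imp_le\<close>)
  moreover have "\<forall>i. s i \<le> Q" using sb less_imp_le by blast
  ultimately obtain l where l: "s \<longlonglongrightarrow> l" "\<forall>n. s n \<le> l"
    using incseq_convergent[of s Q] by blast
  have lQ: "l \<le> Q" using LIMSEQ_le_const2[OF l(1), of Q] sb by (auto intro: less_imp_le)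
  have lP: "P \<le> l" using l(2) sb[of 0] by (meson order.trans)
  have lI: "l \<in> {a..b}" using lP lQ PQ by auto
  have "(\<lambda>n. \<sigma> (s n)) \<longlonglongrightarrow> \<sigma> l"
    by (rule continuous_on_tendsto_compose[OF cont l(1) lI]) (use sI in auto)
  moreover have "(\<lambda>n. \<sigma> (s n)) \<longlonglongrightarrow> l" using LIMSEQ_Suc[OF l(1)] ssuc by simp
  ultimately have "\<sigma> l = l" using LIMSEQ_unique by blast
  then have "l = Q" using nf[of l] lP lQ by fastforce
  then have "\<forall>\<^sub>F n in sequentially. Q - \<epsilon> < s n" using order_tendstoD(1)[OF l(1)] e by simp
  then obtain n where "Q - \<epsilon> < s n" unfolding eventually_sequentially by blast
  then show ?thesis by (auto simp: s_def)
qed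



context setting
begin

lemma pow_fix: "\<sigma> P = P \<Longrightarrow> (\<sigma>^^n) P = P" by (induction n) auto

lemma G_fix_a: "h \<in> G \<Longrightarrow> h a = a"
proof -
  assume h: "h \<in> G"
  have aI: "a \<in> {a..b}" using ab by auto
  obtain y where y: "y \<in> {a..b}" "h y = a" using G_surj[OF h] aI by (metis imageE)
  have "h a \<le> h y" using G_le[OF h aI y(1)] y by auto
  moreover have "a \<le> h a" using G_maps[OF h aI] by auto
  ultimately show ?thesis using y by auto
qed

lemma G_fix_b: "h \<in> G \<Longrightarrow> h b = b"
proof -
  assume h: "h \<in> G"
  have bI: "b \<in> {a..b}" using ab by auto
  obtain y where y: "y \<in> {a..b}" "h y = b" using G_surj[OF h] bI by (metis imageE)
  have "h y \<le> h b" using G_le[OF h y(1) bI] y by auto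
  moreover have "h b \<le> b" using G_maps[OF h bI] by auto
  ultimately show ?thesis using y by auto
qed


lemma no_cross:
  assumes f: "f \<in> G" and g: "g \<in> G"
  and u: "u \<in> {a..b}" "c u \<noteq> u" and w: "w \<in> {a..b}" "c w \<noteq> w" and v: "v \<in> {a..b}" "c v \<noteq> v"
  and uw: "u < w" and wv: "w < v"
  and gu: "\<forall>n. ipow {a..b} g n u < w" and fv: "\<forall>n. w < ipow {a..b} f n v"
  and N1: "ipow {a..b} g N v < w" and N2: "w < ipow {a..b} f N u"
  shows False
proof -
  let ?I = "{a..b}"
  define Og where "Og = range (\<lambda>n. ipow ?I g n u)"
  have Og: "Og \<subseteq> ?I" "Og \<noteq> {}" using ipow_in[OF g u(1)] by (auto simp: Og_def)
  have Og1: "g ob \<in> Og" if "ob \<in> Og" for ob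
    using that ipow_succ[OF g u(1)] by (auto simp: Og_def)
  have Og2: "\<exists>ob'\<in>Og. ob = g ob'" if obm: "ob \<in> Og" for ob
  proof -
    obtain n where "ob = ipow ?I g n u" using obm by (auto simp: Og_def)
    then have "ob = g (ipow ?I g (n - 1) u)" using ipow_succ[OF g u(1), of "n - 1"] by simp
    then show ?thesis by (auto simp: Og_def)
  qed
  have S0: "Sup Og \<in> ?I \<and> g (Sup Og) = Sup Og"
    by (rule orbit_sup_fixed[OF G_cont[OF g] G_le[OF g] Og Og1 Og2])
  have bOg: "bdd_above Og" using Og by (intro bdd_aboveI[of _ b]) auto
  have uS0: "u \<le> Sup Og"
  proof -
    have "u \<in> Og" unfolding Og_def by (rule range_eqI[of _ _ 0]) (simp add: ipow_def)
    then show ?thesis using cSup_upper[OF _ bOg] by blast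
  qed
  have S0w: "Sup Og \<le> w" using gu by (intro cSup_least[OF Og(2)]) (auto simp: Og_def less_imp_le)
  define Fg where "Fg = {x \<in> {u..w}. g x - x = 0}"
  have cFg: "closed Fg" unfolding Fg_def
    by (rule continuous_closed_preimage_constant) (use G_cont[OF g] u w in \<open>auto intro!: continuous_intros intro: continuous_on_subset\<close>)
  have Fgne: "Sup Og \<in> Fg" using S0 uS0 S0w by (auto simp: Fg_def)
  have bFg: "bdd_above Fg" by (rule bdd_aboveI[of _ w]) (auto simp: Fg_def)
  define P where "P = Sup Fg"
  have PF: "P \<in> Fg" unfolding P_def using closed_contains_Sup[OF _ bFg cFg] Fgne by auto
  have Pmax: "r \<le> P" if "r \<in> Fg" for r unfolding P_def using cSup_upper[OF that bFg] .
  have P: "u \<le> P" "P \<le> w" "g P = P" using PF by (auto simp: Fg_def)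
  have PI: "P \<in> ?I" using P u w by auto
  have nofixg: "g r \<noteq> r" if r: "P < r" "r \<le> v" for r
  proof
    assume gr: "g r = r"
    show False
    proof (cases "r \<le> w")
      case True
      then have "r \<in> Fg" using gr r P by (auto simp: Fg_def)
      then show False using Pmax r by fastforce
    next
      case False
      have rI: "r \<in> ?I" using r P u v by auto
      have "ipow ?I g N r \<le> ipow ?I g N v" using ipow_mono[OF g rI v(1) r(2)] .
      then show False using ipow_fix[OF g rI gr] N1 False by auto
    qed
  qed
  have Pw: "P < w"
  proof (rule ccontr)
    assume "\<not> P < w"
    then have "P = w" using P by auto
    then have "ipow ?I g N w \<le> ipow ?I g N v" using ipow_mono[OF g w(1) v(1)] wv by auto
    then show False using ipow_fix[OF g w(1)] P \<open>P = w\<close> N1 by auto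
  qed
  define Of where "Of = range (\<lambda>n. ipow ?I f n v)"
  have Of: "Of \<subseteq> ?I" "Of \<noteq> {}" using ipow_in[OF f v(1)] by (auto simp: Of_def)
  have Of1: "f ob \<in> Of" if "ob \<in> Of" for ob
    using that ipow_succ[OF f v(1)] by (auto simp: Of_def)
  have Of2: "\<exists>ob'\<in>Of. ob = f ob'" if obm: "ob \<in> Of" for ob
  proof -
    obtain n where "ob = ipow ?I f n v" using obm by (auto simp: Of_def)
    then have "ob = f (ipow ?I f (n - 1) v)" using ipow_succ[OF f v(1), of "n - 1"] by simp
    then show ?thesis by (auto simp: Of_def)
  qed
  have T0: "Inf Of \<in> ?I \<and> f (Inf Of) = Inf Of"
    by (rule orbit_inf_fixed[OF G_cont[OF f] G_le[OF f] Of Of1 Of2])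
  have bOf: "bdd_below Of" using Of by (intro bdd_belowI[of _ a]) auto
  have vT0: "Inf Of \<le> v"
  proof -
    have "v \<in> Of" unfolding Of_def by (rule range_eqI[of _ _ 0]) (simp add: ipow_def)
    then show ?thesis using cInf_lower[OF _ bOf] by blast
  qed
  have T0w: "w \<le> Inf Of" using fv by (intro cInf_greatest[OF Of(2)]) (auto simp: Of_def less_imp_le)
  define Ff where "Ff = {x \<in> {w..v}. f x - x = 0}"
  have cFf: "closed Ff" unfolding Ff_def
    by (rule continuous_closed_preimage_constant) (use G_cont[OF f] v w in \<open>auto intro!: continuous_intros intro: continuous_on_subset\<close>)
  have Ffne: "Inf Of \<in> Ff" using T0 vT0 T0w by (auto simp: Ff_def)
  have bFf: "bdd_below Ff" by (rule bdd_belowI[of _ w]) (auto simp: Ff_def)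
  define Q where "Q = Inf Ff"
  have QF: "Q \<in> Ff" unfolding Q_def using closed_contains_Inf[OF _ bFf cFf] Ffne by auto
  have Qmin: "Q \<le> r" if "r \<in> Ff" for r unfolding Q_def using cInf_lower[OF that bFf] .
  have Q: "w \<le> Q" "Q \<le> v" "f Q = Q" using QF by (auto simp: Ff_def)
  have QI: "Q \<in> ?I" using Q v w by auto
  have nofixf: "f r \<noteq> r" if r: "u \<le> r" "r < Q" for r
  proof
    assume fr: "f r = r"
    show False
    proof (cases "w \<le> r")
      case True
      then have "r \<in> Ff" using fr r Q by (auto simp: Ff_def)
      then show False using Qmin r by fastforce
    next
      case False
      have rI: "r \<in> ?I" using r Q u v by auto
      have "ipow ?I f N u \<le> ipow ?I f N r" using ipow_mono[OF f u(1) rI r(1)] .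
      then show False using ipow_fix[OF f rI fr] N2 False by auto
    qed
  qed
  have wQ: "w < Q"
  proof (rule ccontr)
    assume "\<not> w < Q"
    then have "Q = w" using Q by auto
    then have "ipow ?I f N u \<le> ipow ?I f N w" using ipow_mono[OF f u(1) w(1)] uw by auto
    then show False using ipow_fix[OF f w(1)] Q \<open>Q = w\<close> N2 by auto
  qed
  have PQ: "P < Q" using Pw wQ by simp
  define \<epsilon> where "\<epsilon> = (Q - P) / 3"
  have \<epsilon>: "\<epsilon> > 0" "P + \<epsilon> < Q - \<epsilon>" using PQ by (auto simp: \<epsilon>_def field_simps)
  have abPQ: "a \<le> P" "Q \<le> b" using PI QI by auto
  obtain \<sigma> where \<sigma>: "\<sigma> \<in> G" "\<sigma> P = P" "\<sigma> Q < Q" "\<And>x. P < x \<Longrightarrow> x \<le> Q \<Longrightarrow> \<sigma> x \<noteq> x"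
  proof (cases "g Q < Q")
    case True
    then show ?thesis using that[of g] g P nofixg Q by auto
  next
    case False
    then have gQ: "Q < g Q" using nofixg[of Q] PQ Q by fastforce
    obtain gi where gi: "gi \<in> G" "\<forall>x\<in>?I. gi x = inv_into ?I g x" using G_inv[OF g] by blast
    have giP: "gi P = P" using gi(2) PI inv_left[OF g PI] P(3) by simp
    have giQ: "gi Q < Q"
    proof (rule ccontr)
      assume "\<not> gi Q < Q"
      then have "g Q \<le> g (gi Q)" using G_le[OF g QI G_maps[OF gi(1) QI]] by auto
      then show False using inv_right[OF g QI] gi gQ QI by auto
    qed
    have "gi x \<noteq> x" if x: "P < x" "x \<le> Q" for x
    proof
      assume "gi x = x"
      moreover have xI: "x \<in> ?I" using x PI QI by auto
      ultimately have "g x = x" using inv_right[OF g xI] gi(2) xI by simp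
      then show False using nofixg[of x] x Q by auto
    qed
    then show ?thesis using that[of gi] gi giP giQ by auto
  qed
  obtain n1 where n1: "(\<sigma>^^n1) Q < P + \<epsilon>"
    using attract_down[OF G_cont[OF \<sigma>(1)] G_maps[OF \<sigma>(1)] G_less[OF \<sigma>(1)] abPQ(1) PQ abPQ(2) \<sigma>(2,3) \<sigma>(4) \<epsilon>(1)]
    by blast
  obtain hA where hA: "hA \<in> G" "\<forall>x\<in>?I. hA x = (\<sigma>^^n1) x" using G_pow[OF \<sigma>(1)] by blast
  have hAP: "hA P = P" using hA PI pow_fix[of \<sigma> P n1] \<sigma>(2) by auto
  have hAQ: "hA Q < P + \<epsilon>" using hA QI n1 by auto
  obtain \<rho> where \<rho>: "\<rho> \<in> G" "\<rho> Q = Q" "P < \<rho> P" "\<And>x. P \<le> x \<Longrightarrow> x < Q \<Longrightarrow> \<rho> x \<noteq> x"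
  proof (cases "P < f P")
    case True
    then show ?thesis using that[of f] f Q nofixf P by auto
  next
    case False
    then have fP: "f P < P" using nofixf[of P] PQ P by fastforce
    obtain fi where fi: "fi \<in> G" "\<forall>x\<in>?I. fi x = inv_into ?I f x" using G_inv[OF f] by blast
    have fiQ: "fi Q = Q" using fi(2) QI inv_left[OF f QI] Q(3) by simp
    have fiP: "P < fi P"
    proof (rule ccontr)
      assume "\<not> P < fi P"
      then have "f (fi P) \<le> f P" using G_le[OF f G_maps[OF fi(1) PI] PI] by auto
      then show False using inv_right[OF f PI] fi fP PI by auto
    qed
    have "fi x \<noteq> x" if x: "P \<le> x" "x < Q" for x
    proof
      assume "fi x = x"
      moreover have xI: "x \<in> ?I" using x PI QI by auto
      ultimately have "f x = x" using inv_right[OF f xI] fi(2) xI by simp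
      then show False using nofixf[of x] x P by auto
    qed
    then show ?thesis using that[of fi] fi fiP fiQ by auto
  qed
  obtain n2 where n2: "Q - \<epsilon> < (\<rho>^^n2) P"
    using attract_up[OF G_cont[OF \<rho>(1)] G_maps[OF \<rho>(1)] G_less[OF \<rho>(1)] abPQ(1) PQ abPQ(2) \<rho>(2,3) \<rho>(4) \<epsilon>(1)]
    by blast
  obtain hB where hB: "hB \<in> G" "\<forall>x\<in>?I. hB x = (\<rho>^^n2) x" using G_pow[OF \<rho>(1)] by blast
  have hBQ: "hB Q = Q" using hB QI pow_fix[of \<rho> Q n2] \<rho>(2) by auto
  have hBP: "Q - \<epsilon> < hB P" using hB PI n2 by auto
  have KI: "{P..Q} \<subseteq> ?I" using PI QI by auto
  have hAK: "\<forall>x\<in>{P..Q}. hA x \<in> {P..Q}"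
  proof
    fix x assume x: "x \<in> {P..Q}"
    then have "hA P \<le> hA x" "hA x \<le> hA Q" using G_le[OF hA(1)] KI PI QI by auto
    then show "hA x \<in> {P..Q}" using hAP hAQ \<epsilon> by auto
  qed
  have hBK: "\<forall>x\<in>{P..Q}. hB x \<in> {P..Q}"
  proof
    fix x assume x: "x \<in> {P..Q}"
    then have "hB P \<le> hB x" "hB x \<le> hB Q" using G_le[OF hB(1)] KI PI QI by auto
    then show "hB x \<in> {P..Q}" using hBQ hBP \<epsilon> by auto
  qed
  have hAB: "hA Q < hB P" using hAQ hBP \<epsilon> by linarith
  let ?t = "min \<tau> 1"
  have t: "0 < ?t" "?t \<le> 1" using tau by auto
  obtain A' LA where A': "\<forall>x\<in>?I. (hA has_real_derivative A' x) (at x within ?I)" "\<forall>x\<in>?I. A' x > 0"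
    "LA \<ge> 0" "\<forall>x\<in>?I. \<forall>y\<in>?I. A' x \<le> A' y * exp (LA * \<bar>x - y\<bar> powr ?t)"
    using G_deriv[OF hA(1)] by blast
  obtain B' LB where B': "\<forall>x\<in>?I. (hB has_real_derivative B' x) (at x within ?I)" "\<forall>x\<in>?I. B' x > 0"
    "LB \<ge> 0" "\<forall>x\<in>?I. \<forall>y\<in>?I. B' x \<le> B' y * exp (LB * \<bar>x - y\<bar> powr ?t)"
    using G_deriv[OF hB(1)] by blast
  define L where "L = max LA LB"
  have Lmono: "h' x \<le> h' y * exp (L * \<bar>x - y\<bar> powr ?t)"
    if "h' x \<le> h' y * exp (L0 * \<bar>x - y\<bar> powr ?t)" "L0 \<le> L" "h' y > 0" for h' x y L0
  proof -
    have "exp (L0 * \<bar>x - y\<bar> powr ?t) \<le> exp (L * \<bar>x - y\<bar> powr ?t)"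
      using that(2) by (simp add: mult_right_mono)
    then show ?thesis using that(1,3) by (meson mult_left_mono less_imp_le order_trans)
  qed
  have AL: "\<forall>x\<in>?I. \<forall>y\<in>?I. A' x \<le> A' y * exp (L * \<bar>x - y\<bar> powr ?t)"
  proof (intro ballI)
    fix x y assume "x \<in> ?I" "y \<in> ?I"
    then show "A' x \<le> A' y * exp (L * \<bar>x - y\<bar> powr ?t)"
      using A'(2,4) Lmono[of A' x y LA] by (simp add: L_def)
  qed
  have BL: "\<forall>x\<in>?I. \<forall>y\<in>?I. B' x \<le> B' y * exp (L * \<bar>x - y\<bar> powr ?t)"
  proof (intro ballI)
    fix x y assume "x \<in> ?I" "y \<in> ?I"
    then show "B' x \<le> B' y * exp (L * \<bar>x - y\<bar> powr ?t)"
      using B'(2,4) Lmono[of B' x y LB] by (simp add: L_def)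
  qed
  interpret pp: pingpong a b P Q ?t L hA hB A' B'
    by unfold_locales (use ab abPQ PQ G_maps[OF hA(1)] G_maps[OF hB(1)] A' B' AL BL t hAK hBK hAB L_def in auto)
  obtain ws where ws: "\<forall>x\<in>{P..Q}. pp.Dw ws x \<le> 1/2" using pp.contracting_word by blast
  have evG: "\<exists>h\<in>G. \<forall>x\<in>?I. h x = pp.ev ws' x" for ws'
  proof (induction ws')
    case Nil then show ?case using G_id by simp
  next
    case (Cons s ws')
    then obtain h2 where h2: "h2 \<in> G" "\<forall>x\<in>?I. h2 x = pp.ev ws' x" by blast
    have sG: "pp.sel s \<in> G" using hA hB by (simp add: pp.sel_def)
    obtain h3 where "h3 \<in> G" "\<forall>x\<in>?I. h3 x = pp.sel s (h2 x)" using G_comp[OF sG h2(1)] by blast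
    then show ?case using h2 by auto
  qed
  obtain hW where hW: "hW \<in> G" "\<forall>x\<in>?I. hW x = pp.ev ws x" using evG by blast
  obtain W' LW where W': "\<forall>x\<in>?I. (hW has_real_derivative W' x) (at x within ?I)" "\<forall>x\<in>?I. W' x > 0"
    "continuous_on ?I W'" "LW \<ge> 0" "\<forall>x\<in>?I. \<forall>y\<in>?I. W' x \<le> W' y * exp (LW * \<bar>x - y\<bar> powr ?t)"
    using G_deriv[OF hW(1)] by blast
  have W'D: "W' x = pp.Dw ws x" if x: "x \<in> ?I" for x
  proof -
    have "(hW has_real_derivative pp.Dw ws x) (at x within ?I)"
      by (rule has_field_derivative_transform_within[OF pp.evd[OF x] zero_less_one x]) (use hW in auto)
    then show ?thesis using deriv_unique_Icc[OF ab x W'(1)[rule_format, OF x]] by blast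
  qed
  have Wsm: "\<forall>x\<in>{P..Q}. W' x \<le> 1/2" using ws W'D KI by auto
  have WK: "\<forall>x\<in>{P..Q}. hW x \<in> {P..Q}" using pp.evK hW KI by auto
  \<comment> \<open>the component (alpha, beta) of supp c containing w\<close>
  have cG: "c \<in> G" by (rule c_G)
  have aI: "a \<in> ?I" and bI: "b \<in> ?I" using ab by auto
  define Fc1 where "Fc1 = {x \<in> {a..w}. c x - x = 0}"
  have cFc1: "closed Fc1" unfolding Fc1_def
    by (rule continuous_closed_preimage_constant) (use G_cont[OF cG] w in \<open>auto intro!: continuous_intros intro: continuous_on_subset\<close>)
  have aFc1: "a \<in> Fc1" using G_fix_a[OF cG] w by (auto simp: Fc1_def)
  have bFc1: "bdd_above Fc1" by (rule bdd_aboveI[of _ w]) (auto simp: Fc1_def)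
  define \<alpha> where "\<alpha> = Sup Fc1"
  have \<alpha>F: "\<alpha> \<in> Fc1" unfolding \<alpha>_def using closed_contains_Sup[OF _ bFc1 cFc1] aFc1 by auto
  have \<alpha>max: "r \<le> \<alpha>" if "r \<in> Fc1" for r unfolding \<alpha>_def using cSup_upper[OF that bFc1] .
  have \<alpha>: "a \<le> \<alpha>" "\<alpha> < w" "c \<alpha> = \<alpha>" using \<alpha>F w(2) by (auto simp: Fc1_def le_less)
  define Fc2 where "Fc2 = {x \<in> {w..b}. c x - x = 0}"
  have cFc2: "closed Fc2" unfolding Fc2_def
    by (rule continuous_closed_preimage_constant) (use G_cont[OF cG] w in \<open>auto intro!: continuous_intros intro: continuous_on_subset\<close>)
  have bFc2': "b \<in> Fc2" using G_fix_b[OF cG] w by (auto simp: Fc2_def)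
  have bFc2: "bdd_below Fc2" by (rule bdd_belowI[of _ w]) (auto simp: Fc2_def)
  define \<beta> where "\<beta> = Inf Fc2"
  have \<beta>F: "\<beta> \<in> Fc2" unfolding \<beta>_def using closed_contains_Inf[OF _ bFc2 cFc2] bFc2' by auto
  have \<beta>min: "\<beta> \<le> r" if "r \<in> Fc2" for r unfolding \<beta>_def using cInf_lower[OF that bFc2] .
  have \<beta>: "w < \<beta>" "\<beta> \<le> b" "c \<beta> = \<beta>" using \<beta>F w(2) by (auto simp: Fc2_def le_less)
  have \<alpha>I: "\<alpha> \<in> ?I" and \<beta>I: "\<beta> \<in> ?I" using \<alpha> \<beta> w by auto
  have nofixc: "c r \<noteq> r" if r: "\<alpha> < r" "r < \<beta>" for r
  proof
    assume cr: "c r = r"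
    show False
    proof (cases "r \<le> w")
      case True
      then have "r \<in> Fc1" using cr r \<alpha> by (auto simp: Fc1_def)
      then show False using \<alpha>max r by fastforce
    next
      case False
      then have "r \<in> Fc2" using cr r \<beta> by (auto simp: Fc2_def)
      then show False using \<beta>min r by fastforce
    qed
  qed
  have fixJ: "h \<alpha> = \<alpha> \<and> h \<beta> = \<beta>" if h: "h \<in> G" and y: "\<alpha> < y" "y < \<beta>" "h y = y" for h y
  proof -
    have yI: "y \<in> ?I" using y \<alpha>I \<beta>I by auto
    obtain hi where hi: "hi \<in> G" "\<forall>x\<in>?I. hi x = inv_into ?I h x" using G_inv[OF h] by blast
    have hiy: "hi y = y" using hi(2) yI inv_left[OF h yI] y(3) by simp
    have cf: "c (k x) = k x" if k: "k \<in> G" and x: "x \<in> ?I" "c x = x" for k x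
      using comm[OF k x(1)] x(2) by simp
    have le\<alpha>: "k \<alpha> \<le> \<alpha>" if k: "k \<in> G" "k y = y" for k
    proof (rule ccontr)
      assume "\<not> k \<alpha> \<le> \<alpha>"
      moreover have "k \<alpha> < y" using G_less[OF k(1) \<alpha>I yI y(1)] k(2) by simp
      ultimately show False using nofixc[of "k \<alpha>"] cf[OF k(1) \<alpha>I \<alpha>(3)] y by auto
    qed
    have ge\<beta>: "\<beta> \<le> k \<beta>" if k: "k \<in> G" "k y = y" for k
    proof (rule ccontr)
      assume "\<not> \<beta> \<le> k \<beta>"
      moreover have "y < k \<beta>" using G_less[OF k(1) yI \<beta>I y(2)] k(2) by simp
      ultimately show False using nofixc[of "k \<beta>"] cf[OF k(1) \<beta>I \<beta>(3)] y by auto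
    qed
    have "h \<alpha> = \<alpha>"
    proof -
      have "hi \<alpha> \<le> \<alpha>" using le\<alpha>[OF hi(1) hiy] .
      then have "h (hi \<alpha>) \<le> h \<alpha>" using G_le[OF h G_maps[OF hi(1) \<alpha>I] \<alpha>I] by simp
      then have "\<alpha> \<le> h \<alpha>" using inv_right[OF h \<alpha>I] hi(2) \<alpha>I by simp
      then show ?thesis using le\<alpha>[OF h y(3)] by simp
    qed
    moreover have "h \<beta> = \<beta>"
    proof -
      have "\<beta> \<le> hi \<beta>" using ge\<beta>[OF hi(1) hiy] .
      then have "h \<beta> \<le> h (hi \<beta>)" using G_le[OF h \<beta>I G_maps[OF hi(1) \<beta>I]] by simp
      then have "h \<beta> \<le> \<beta>" using inv_right[OF h \<beta>I] hi(2) \<beta>I by simp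
      then show ?thesis using ge\<beta>[OF h y(3)] by simp
    qed
    ultimately show ?thesis ..
  qed
  obtain c' where c': "\<forall>x\<in>?I. (c has_real_derivative c' x) (at x within ?I)" "\<forall>x\<in>?I. c' x > 0"
    "continuous_on ?I c'" using G_deriv[OF cG] by blast
  have commW: "\<forall>x\<in>?I. c (hW x) = hW (c x)" using comm[OF hW(1)] by blast
  show False
  proof (cases "\<alpha> < P")
    case True
    have Q\<beta>: "Q < \<beta>"
    proof (rule ccontr)
      assume "\<not> Q < \<beta>"
      have "g \<beta> = \<beta>" using fixJ[OF g True] P Pw \<beta> by auto
      then show False using nofixg[of \<beta>] \<open>\<not> Q < \<beta>\<close> Q Pw \<beta> by auto
    qed
    have "\<exists>z. P \<le> z \<and> z \<le> Q \<and> hW z - z = 0"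
    proof (rule IVT2')
      show "hW Q - Q \<le> 0" "0 \<le> hW P - P" using WK PQ by auto
      show "P \<le> Q" using PQ by simp
      show "continuous_on {P..Q} (\<lambda>z. hW z - z)"
        by (intro continuous_intros continuous_on_subset[OF G_cont[OF hW(1)] KI])
    qed
    then obtain z where z: "P \<le> z" "z \<le> Q" "hW z = z" by auto
    have zI: "z \<in> ?I" using z KI by auto
    have cz: "c z \<noteq> z" using nofixc[of z] z True Q\<beta> by auto
    have "W' z \<le> 1/2" using Wsm z by simp
    then have "W' z < 1" by simp
    then show False
      using D1[OF ab _ W'(1) W'(3) _ c'(1) c'(2) G_smono[OF cG] commW zI z(3) cz] G_maps[OF hW(1)] G_maps[OF cG]
      by blast
  next
    case False
    then have P\<alpha>: "P \<le> \<alpha>" by simp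
    have \<beta>Q: "\<beta> \<le> Q"
    proof (rule ccontr)
      assume "\<not> \<beta> \<le> Q"
      have "f \<alpha> = \<alpha>" using fixJ[OF f _ _ Q(3), of] \<alpha> wQ \<open>\<not> \<beta> \<le> Q\<close> by auto
      then show False using nofixf[of \<alpha>] P\<alpha> P \<alpha> wQ by auto
    qed
    show False
      using D2[OF ab _ W'(1) W'(2) W'(5) W'(4) t(1) abPQ(1) less_imp_le[OF PQ] abPQ(2) WK Wsm _ _ _ c'(1) c'(3)
          G_smono[OF cG] commW P\<alpha> \<alpha>(2) \<beta>(1) \<beta>Q \<alpha>(3) \<beta>(3) w(2)]
        G_maps[OF hW(1)] G_maps[OF cG]
      by auto
  qed
qed


end


theorem lemma3p10:
  fixes a b \<tau> :: real and G :: "(real \<Rightarrow> real) set" and c :: "real \<Rightarrow> real"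
  assumes "a < b" and "\<tau> > 0"
    and "diff_subgroup {a..b} \<tau> G"
    and "in_center {a..b} G c"
  shows "conradian_on {a..b} G (supp {a..b} c)"
proof -
  interpret setting a b \<tau> G c using assms by unfold_locales
  show ?thesis unfolding conradian_on_def crossed_def
  proof (intro ballI notI)
    fix f g assume f: "f \<in> G" and g: "g \<in> G"
    assume "\<exists>u\<in>supp {a..b} c. \<exists>w\<in>supp {a..b} c. \<exists>v\<in>supp {a..b} c. u < w \<and> w < v \<and>
       (\<forall>n. ipow {a..b} g n u < w \<and> w < ipow {a..b} f n v) \<and>
       (\<exists>N. ipow {a..b} g N v < w \<and> w < ipow {a..b} f N u)"
    then obtain u w v N where uwv: "u \<in> supp {a..b} c" "w \<in> supp {a..b} c" "v \<in> supp {a..b} c"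
      "u < w" "w < v" "\<forall>n. ipow {a..b} g n u < w \<and> w < ipow {a..b} f n v"
      "ipow {a..b} g N v < w" "w < ipow {a..b} f N u" by blast
    show False
      by (rule no_cross[OF f g, of u w v N]) (use uwv in \<open>auto simp: supp_def\<close>)
  qed
qed

end
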